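(* In the kernel SGD setting with hypercontractivity constant $C$, assume $\eta_{\max}:=\max_{0\le i\le N-1}\eta_i\le\lambda_1^{-1}$ and $\eta_{\max}<\frac{1}{2C\,\mathrm{tr}(\mathcal T)}$. Then $\sup_{0\le k\le N}\mathbb E[\mathcal E(\theta_k)]\le M$ for a constant $M$ depending only on $C,\sigma^2$ and $\mathcal E(\theta_0)=\frac12\sum_ja_j^2\lambda_j^s$ (independent of $N$ and of the schedule).
   Context: Kernel SGD setting: $\phi:\mathcal X\to\mathbb H$ with $\mathbb E[K(x,x)]<\infty$, covariance $\mathcal T=\mathbb E[\phi(x)\otimes\phi(x)]$ with eigenpairs $(\lambda_j,v_j)$ and $\mathrm{tr}(\mathcal T)=\sum_j\lambda_j$; $y=f^*(x)+\epsilon$, $\epsilon\sim\mathcal N(0,\sigma^2)$ independent of $x$; $f^*=\sum_ja_j\lambda_j^{s/2}e_j$ with $\sum a_j^2\le1$, $\theta_j^*=a_j\lambda_j^{(s-1)/2}$. Hypercontractivity: $\mathbb E[\langle u,\phi(x)\rangle^2\langle v,\phi(x)\rangle^2]\le C\,\mathbb E[\langle u,\phi(x)\rangle^2]\mathbb E[\langle v,\phi(x)\rangle^2]$. SGD: $\theta_0=0$, $\theta_{k+1}=\theta_k-\eta_k(\langle\theta_k,\phi(x_k)\rangle-y_k)\phi(x_k)$, i.i.d. samples. Excess risk $\mathcal E(\theta)=\frac12\sum_j\lambda_j(\langle\theta,v_j\rangle-\theta_j^* )^2$. *)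

theory Defs
  imports "HOL-Probability.Probability"
begin

definition cov_op :: "'x measure \<Rightarrow> ('x \<Rightarrow> 'h::{real_inner,banach,second_countable_topology}) \<Rightarrow> 'h \<Rightarrow> 'h" where
  "cov_op \<rho> \<phi> u = (\<integral>x. (u \<bullet> \<phi> x) *\<^sub>R \<phi> x \<partial>\<rho>)"

text \<open>(lam j, v j) are the eigenpairs of T in nonincreasing order (lam 0 = lambda_1 is the largest),
  v orthonormal on the indices with positive eigenvalue, and T has the spectral decomposition
  T u = sum_j lam_j <u, v_j> v_j.\<close>
definition eigen_system :: "'x measure \<Rightarrow> ('x \<Rightarrow> 'h::{real_inner,banach,second_countable_topology})
    \<Rightarrow> (nat \<Rightarrow> real) \<Rightarrow> (nat \<Rightarrow> 'h) \<Rightarrow> bool" where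
  "eigen_system \<rho> \<phi> lam v \<longleftrightarrow>
     (\<forall>j. 0 \<le> lam j) \<and> antimono lam \<and>
     (\<forall>i j. 0 < lam i \<longrightarrow> 0 < lam j \<longrightarrow> v i \<bullet> v j = (if i = j then 1 else 0)) \<and>
     (\<forall>j. cov_op \<rho> \<phi> (v j) = lam j *\<^sub>R v j) \<and>
     (\<forall>u. (\<lambda>j. (lam j * (u \<bullet> v j)) *\<^sub>R v j) sums cov_op \<rho> \<phi> u)"

definition hypercontractive :: "'x measure \<Rightarrow> ('x \<Rightarrow> 'h::real_inner) \<Rightarrow> real \<Rightarrow> bool" where
  "hypercontractive \<rho> \<phi> C \<longleftrightarrow>
     (\<forall>u w. (\<integral>\<^sup>+x. ennreal ((u \<bullet> \<phi> x)\<^sup>2 * (w \<bullet> \<phi> x)\<^sup>2) \<partial>\<rho>)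
        \<le> ennreal C * (\<integral>\<^sup>+x. ennreal ((u \<bullet> \<phi> x)\<^sup>2) \<partial>\<rho>) * (\<integral>\<^sup>+x. ennreal ((w \<bullet> \<phi> x)\<^sup>2) \<partial>\<rho>))"

definition theta_star :: "(nat \<Rightarrow> real) \<Rightarrow> (nat \<Rightarrow> real) \<Rightarrow> real \<Rightarrow> nat \<Rightarrow> real" where
  "theta_star a lam s j = a j * lam j powr ((s - 1) / 2)"

definition excess_risk :: "(nat \<Rightarrow> real) \<Rightarrow> (nat \<Rightarrow> 'h::real_inner) \<Rightarrow> (nat \<Rightarrow> real) \<Rightarrow> 'h \<Rightarrow> ennreal" where
  "excess_risk lam v ts \<theta> = (\<Sum>j. ennreal (1/2 * lam j * (\<theta> \<bullet> v j - ts j)\<^sup>2))"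

primrec sgd_iter :: "(nat \<Rightarrow> real) \<Rightarrow> ('x \<Rightarrow> 'h::real_inner) \<Rightarrow> (nat \<Rightarrow> 'x) \<Rightarrow> (nat \<Rightarrow> real) \<Rightarrow> nat \<Rightarrow> 'h" where
  "sgd_iter \<eta> \<phi> xs ys 0 = 0"
| "sgd_iter \<eta> \<phi> xs ys (Suc k) =
     sgd_iter \<eta> \<phi> xs ys k - (\<eta> k * (sgd_iter \<eta> \<phi> xs ys k \<bullet> \<phi> (xs k) - ys k)) *\<^sub>R \<phi> (xs k)"

end

theory Submission
  imports Defs
begin


locale kset =
  fixes \<rho> :: "'x measure" and \<phi> :: "'x \<Rightarrow> 'h::{real_inner,banach,second_countable_topology}"
    and lam :: "nat \<Rightarrow> real" and v :: "nat \<Rightarrow> 'h" and C :: real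
  assumes rho: "prob_space \<rho>" and phim[measurable]: "\<phi> \<in> borel_measurable \<rho>"
    and phi2: "integrable \<rho> (\<lambda>z. (norm (\<phi> z))\<^sup>2)"
    and eig: "eigen_system \<rho> \<phi> lam v" and hc: "hypercontractive \<rho> \<phi> C"
begin

sublocale P: prob_space \<rho> by (rule rho)

lemma lam_nonneg: "0 \<le> lam j" using eig unfolding eigen_system_def by auto
lemma lam_anti: "antimono lam" using eig unfolding eigen_system_def by auto
lemma lam_le0: "lam j \<le> lam 0" using lam_anti by (auto simp: antimono_def)
lemma orth: "0 < lam i \<Longrightarrow> 0 < lam j \<Longrightarrow> v i \<bullet> v j = (if i = j then 1 else 0)"
  using eig unfolding eigen_system_def by auto
lemma eigv: "cov_op \<rho> \<phi> (v j) = lam j *\<^sub>R v j"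
  using eig unfolding eigen_system_def by auto
lemma spec: "(\<lambda>j. (lam j * (u \<bullet> v j)) *\<^sub>R v j) sums cov_op \<rho> \<phi> u"
  using eig unfolding eigen_system_def by auto

lemma inner_phi_meas[measurable]: "(\<lambda>x. u \<bullet> \<phi> x) \<in> borel_measurable \<rho>"
  by (intro borel_measurable_inner) auto
lemma inner_phi_meas'[measurable]: "(\<lambda>x. \<phi> x \<bullet> u) \<in> borel_measurable \<rho>"
  by (intro borel_measurable_inner) auto

lemma int_phi_prod: "integrable \<rho> (\<lambda>x. (u \<bullet> \<phi> x) * (w \<bullet> \<phi> x))"
proof (rule Bochner_Integration.integrable_bound)
  show "integrable \<rho> (\<lambda>x. norm u * norm w * (norm (\<phi> x))\<^sup>2)" using phi2 by simp
  show "(\<lambda>x. (u \<bullet> \<phi> x) * (w \<bullet> \<phi> x)) \<in> borel_measurable \<rho>" by measurable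
  show "AE x in \<rho>. norm ((u \<bullet> \<phi> x) * (w \<bullet> \<phi> x)) \<le> norm (norm u * norm w * (norm (\<phi> x))\<^sup>2)"
  proof (intro AE_I2)
    fix x
    have "\<bar>u \<bullet> \<phi> x\<bar> \<le> norm u * norm (\<phi> x)" by (rule Cauchy_Schwarz_ineq2)
    moreover have "\<bar>w \<bullet> \<phi> x\<bar> \<le> norm w * norm (\<phi> x)" by (rule Cauchy_Schwarz_ineq2)
    ultimately have "\<bar>u \<bullet> \<phi> x\<bar> * \<bar>w \<bullet> \<phi> x\<bar> \<le> (norm u * norm (\<phi> x)) * (norm w * norm (\<phi> x))"
      by (intro mult_mono) auto
    then show "norm ((u \<bullet> \<phi> x) * (w \<bullet> \<phi> x)) \<le> norm (norm u * norm w * (norm (\<phi> x))\<^sup>2)"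
      by (simp add: abs_mult power2_eq_square algebra_simps)
  qed
qed

lemma int_phi_sq: "integrable \<rho> (\<lambda>x. (u \<bullet> \<phi> x)\<^sup>2)"
  using int_phi_prod[of u u] by (simp add: power2_eq_square)

lemma int_phi_sq': "integrable \<rho> (\<lambda>x. (\<phi> x \<bullet> u)\<^sup>2)"
  using int_phi_sq[of u] by (simp add: inner_commute)

lemma int_phi_prod': "integrable \<rho> (\<lambda>x. (\<phi> x \<bullet> u) * (\<phi> x \<bullet> w))"
  using int_phi_prod[of u w] by (simp add: inner_commute)

lemma int_cov_integrand: "integrable \<rho> (\<lambda>x. (u \<bullet> \<phi> x) *\<^sub>R \<phi> x)"
proof (rule Bochner_Integration.integrable_bound)
  show "integrable \<rho> (\<lambda>x. norm u * (norm (\<phi> x))\<^sup>2)" using phi2 by simp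
  show "(\<lambda>x. (u \<bullet> \<phi> x) *\<^sub>R \<phi> x) \<in> borel_measurable \<rho>" by measurable
  show "AE x in \<rho>. norm ((u \<bullet> \<phi> x) *\<^sub>R \<phi> x) \<le> norm (norm u * (norm (\<phi> x))\<^sup>2)"
  proof (intro AE_I2)
    fix x
    have "\<bar>u \<bullet> \<phi> x\<bar> \<le> norm u * norm (\<phi> x)" by (rule Cauchy_Schwarz_ineq2)
    then have "\<bar>u \<bullet> \<phi> x\<bar> * norm (\<phi> x) \<le> (norm u * norm (\<phi> x)) * norm (\<phi> x)"
      by (intro mult_right_mono) auto
    then show "norm ((u \<bullet> \<phi> x) *\<^sub>R \<phi> x) \<le> norm (norm u * (norm (\<phi> x))\<^sup>2)"
      by (simp add: power2_eq_square algebra_simps)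
  qed
qed

lemma cov_inner: "(\<integral>x. (u \<bullet> \<phi> x) * (w \<bullet> \<phi> x) \<partial>\<rho>) = cov_op \<rho> \<phi> u \<bullet> w"
proof -
  have "cov_op \<rho> \<phi> u \<bullet> w = (\<integral>x. ((u \<bullet> \<phi> x) *\<^sub>R \<phi> x) \<bullet> w \<partial>\<rho>)"
    unfolding cov_op_def using int_cov_integrand by (subst integral_inner_left) auto
  also have "\<dots> = (\<integral>x. (u \<bullet> \<phi> x) * (w \<bullet> \<phi> x) \<partial>\<rho>)"
    by (simp add: inner_commute)
  finally show ?thesis by simp
qed

lemma phi_orth: "(\<integral>x. (\<phi> x \<bullet> v i) * (\<phi> x \<bullet> v j) \<partial>\<rho>) = (if i = j then lam j else 0)"
proof -
  have e1: "(\<integral>x. (\<phi> x \<bullet> v i) * (\<phi> x \<bullet> v j) \<partial>\<rho>) = lam i * (v i \<bullet> v j)"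
    using cov_inner[of "v i" "v j"] eigv[of i] by (simp add: inner_commute)
  have e2: "(\<integral>x. (\<phi> x \<bullet> v i) * (\<phi> x \<bullet> v j) \<partial>\<rho>) = lam j * (v i \<bullet> v j)"
    using cov_inner[of "v j" "v i"] eigv[of j] by (simp add: inner_commute mult.commute)
  show ?thesis
  proof (cases "i = j")
    case True
    then show ?thesis using e1 orth[of j j] lam_nonneg[of j] by (cases "lam j = 0") auto
  next
    case False
    then show ?thesis using e1 e2 orth[of i j] lam_nonneg[of i] lam_nonneg[of j]
      by (cases "lam i = 0"; cases "lam j = 0") auto
  qed
qed

lemma phi_sq_int: "(\<integral>x. (\<phi> x \<bullet> v j)\<^sup>2 \<partial>\<rho>) = lam j"
  using phi_orth[of j j] by (simp add: power2_eq_square)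

lemma quad: "(\<lambda>i. lam i * (u \<bullet> v i)\<^sup>2) sums (\<integral>x. (u \<bullet> \<phi> x)\<^sup>2 \<partial>\<rho>)"
proof -
  have "(\<lambda>j. ((lam j * (u \<bullet> v j)) *\<^sub>R v j) \<bullet> u) sums (cov_op \<rho> \<phi> u \<bullet> u)"
    by (rule bounded_linear.sums[OF bounded_linear_inner_left spec])
  moreover have "cov_op \<rho> \<phi> u \<bullet> u = (\<integral>x. (u \<bullet> \<phi> x)\<^sup>2 \<partial>\<rho>)"
    using cov_inner[of u u] by (simp add: power2_eq_square)
  ultimately show ?thesis by (simp add: power2_eq_square inner_commute mult.assoc)
qed

lemma bessel:
  assumes "finite J" "\<And>i j. i \<in> J \<Longrightarrow> j \<in> J \<Longrightarrow> v i \<bullet> v j = (if i = j then 1 else 0)"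
  shows "(\<Sum>j\<in>J. (y \<bullet> v j)\<^sup>2) \<le> (norm y)\<^sup>2"
proof -
  define p where "p = (\<Sum>j\<in>J. (y \<bullet> v j) *\<^sub>R v j)"
  have yp: "y \<bullet> p = (\<Sum>j\<in>J. (y \<bullet> v j)\<^sup>2)"
    unfolding p_def by (simp add: inner_sum_right power2_eq_square)
  have vp: "v i \<bullet> p = y \<bullet> v i" if "i \<in> J" for i
  proof -
    have "v i \<bullet> p = (\<Sum>j\<in>J. (y \<bullet> v j) * (v i \<bullet> v j))"
      unfolding p_def by (simp add: inner_sum_right)
    also have "\<dots> = (\<Sum>j\<in>J. if i = j then y \<bullet> v j else 0)"
      using assms(2) that by (intro sum.cong) auto
    also have "\<dots> = y \<bullet> v i" using assms(1) that by simp
    finally show ?thesis .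
  qed
  have pp: "p \<bullet> p = (\<Sum>j\<in>J. (y \<bullet> v j)\<^sup>2)"
  proof -
    have "p \<bullet> p = (\<Sum>i\<in>J. (y \<bullet> v i) * (v i \<bullet> p))"
      unfolding p_def[of ] by (simp add: inner_sum_left)
    also have "\<dots> = (\<Sum>i\<in>J. (y \<bullet> v i)\<^sup>2)"
      using vp by (intro sum.cong) (auto simp: power2_eq_square)
    finally show ?thesis .
  qed
  have "0 \<le> (y - p) \<bullet> (y - p)" by simp
  also have "\<dots> = y \<bullet> y - 2 * (y \<bullet> p) + p \<bullet> p"
    by (simp add: inner_diff_left inner_diff_right inner_commute)
  finally show ?thesis using yp pp by (simp add: power2_norm_eq_inner)
qed

lemma lam_summable: "summable lam"
proof (rule summableI_nonneg_bounded[OF lam_nonneg])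
  fix n
  let ?J = "{j. j < n \<and> 0 < lam j}"
  have "sum lam {..<n} = sum lam ?J"
    using lam_nonneg by (intro sum.mono_neutral_right) (auto simp: order.order_iff_strict)
  also have "\<dots> = (\<Sum>j\<in>?J. \<integral>x. (\<phi> x \<bullet> v j)\<^sup>2 \<partial>\<rho>)" by (simp add: phi_sq_int)
  also have "\<dots> = (\<integral>x. (\<Sum>j\<in>?J. (\<phi> x \<bullet> v j)\<^sup>2) \<partial>\<rho>)"
    by (rule Bochner_Integration.integral_sum[symmetric]) (simp add: int_phi_sq')
  also have "\<dots> \<le> (\<integral>x. (norm (\<phi> x))\<^sup>2 \<partial>\<rho>)"
    by (intro integral_mono phi2 integrable_sum bessel) (auto simp: int_phi_sq' orth)
  finally show "sum lam {..<n} \<le> (\<integral>x. (norm (\<phi> x))\<^sup>2 \<partial>\<rho>)" .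
qed

end


lemma L2_CS:
  fixes f g :: "'a \<Rightarrow> real"
  assumes f2: "integrable M (\<lambda>x. (f x)\<^sup>2)" and g2: "integrable M (\<lambda>x. (g x)\<^sup>2)"
    and fg: "integrable M (\<lambda>x. f x * g x)"
  shows "(\<integral>x. f x * g x \<partial>M)\<^sup>2 \<le> (\<integral>x. (f x)\<^sup>2 \<partial>M) * (\<integral>x. (g x)\<^sup>2 \<partial>M)"
proof -
  define A where "A = (\<integral>x. (f x)\<^sup>2 \<partial>M)"
  define B where "B = (\<integral>x. f x * g x \<partial>M)"
  define D where "D = (\<integral>x. (g x)\<^sup>2 \<partial>M)"
  have key: "0 \<le> A - 2 * t * B + t\<^sup>2 * D" for t
  proof -
    have "0 \<le> (\<integral>x. (f x - t * g x)\<^sup>2 \<partial>M)" by simp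
    also have "(\<integral>x. (f x - t * g x)\<^sup>2 \<partial>M) = (\<integral>x. (f x)\<^sup>2 - 2 * t * (f x * g x) + t\<^sup>2 * (g x)\<^sup>2 \<partial>M)"
      by (intro Bochner_Integration.integral_cong) (auto simp: power2_eq_square algebra_simps)
    also have "\<dots> = A - 2 * t * B + t\<^sup>2 * D"
      unfolding A_def B_def D_def using f2 g2 fg by simp
    finally show ?thesis .
  qed
  have D0: "0 \<le> D" unfolding D_def by simp
  show ?thesis
  proof (cases "D = 0")
    case True
    show ?thesis
    proof (rule ccontr)
      assume "\<not> ?thesis"
      then have "B \<noteq> 0" using True unfolding A_def[symmetric] B_def[symmetric] D_def[symmetric] by auto
      then have "0 < B\<^sup>2" by simp
      have "0 \<le> A - 2 * ((A + 1) / (2 * B)) * B" using key[of "(A + 1) / (2 * B)"] True by simp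
      also have "\<dots> = -1" using \<open>B \<noteq> 0\<close> by (simp add: field_simps)
      finally show False by simp
    qed
  next
    case False
    then have Dp: "0 < D" using D0 by simp
    have "0 \<le> A - 2 * (B / D) * B + (B / D)\<^sup>2 * D" by (rule key)
    also have "\<dots> = A - B\<^sup>2 / D" using Dp by (simp add: field_simps power2_eq_square)
    finally have "B\<^sup>2 / D \<le> A" by simp
    then have "B\<^sup>2 \<le> A * D" using Dp by (simp add: field_simps)
    then show ?thesis unfolding A_def B_def D_def .
  qed
qed

context kset begin

definition L2 :: "('x \<Rightarrow> real) \<Rightarrow> bool" where
  "L2 f \<longleftrightarrow> f \<in> borel_measurable \<rho> \<and> integrable \<rho> (\<lambda>x. (f x)\<^sup>2)"

lemma L2_meas: "L2 f \<Longrightarrow> f \<in> borel_measurable \<rho>" by (simp add: L2_def)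
lemma L2_sq: "L2 f \<Longrightarrow> integrable \<rho> (\<lambda>x. (f x)\<^sup>2)" by (simp add: L2_def)

lemma L2_prod: assumes "L2 f" "L2 g" shows "integrable \<rho> (\<lambda>x. f x * g x)"
proof (rule Bochner_Integration.integrable_bound)
  show "integrable \<rho> (\<lambda>x. (f x)\<^sup>2 + (g x)\<^sup>2)" using assms by (simp add: L2_def)
  show "(\<lambda>x. f x * g x) \<in> borel_measurable \<rho>" using assms by (intro borel_measurable_times) (simp_all add: L2_def)
  show "AE x in \<rho>. norm (f x * g x) \<le> norm ((f x)\<^sup>2 + (g x)\<^sup>2)"
  proof (intro AE_I2)
    fix x
    have "0 \<le> (\<bar>f x\<bar> - \<bar>g x\<bar>)\<^sup>2" by simp
    then have "2 * (\<bar>f x\<bar> * \<bar>g x\<bar>) \<le> (f x)\<^sup>2 + (g x)\<^sup>2" by (simp add: power2_eq_square algebra_simps)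
    moreover have "0 \<le> \<bar>f x\<bar> * \<bar>g x\<bar>" by simp
    ultimately have "\<bar>f x\<bar> * \<bar>g x\<bar> \<le> (f x)\<^sup>2 + (g x)\<^sup>2" by linarith
    then show "norm (f x * g x) \<le> norm ((f x)\<^sup>2 + (g x)\<^sup>2)" by (simp add: abs_mult)
  qed
qed

lemma L2_add: assumes "L2 f" "L2 g" shows "L2 (\<lambda>x. f x + g x)"
proof -
  have "integrable \<rho> (\<lambda>x. (f x)\<^sup>2 + 2 * (f x * g x) + (g x)\<^sup>2)"
    using assms L2_prod[OF assms] by (simp add: L2_def)
  then have "integrable \<rho> (\<lambda>x. (f x + g x)\<^sup>2)" by (simp add: power2_eq_square algebra_simps)
  then show ?thesis using assms by (simp add: L2_def borel_measurable_add)
qed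

lemma L2_cmult: assumes "L2 f" shows "L2 (\<lambda>x. c * f x)"
  using assms by (simp add: L2_def power_mult_distrib borel_measurable_times)

lemma L2_minus: assumes "L2 f" "L2 g" shows "L2 (\<lambda>x. f x - g x)"
  using L2_add[OF assms(1) L2_cmult[OF assms(2), of "-1"]] by simp

lemma L2_sum: assumes "\<And>i. i \<in> I \<Longrightarrow> L2 (f i)" shows "L2 (\<lambda>x. \<Sum>i\<in>I. f i x)"
  using assms
proof (induction I rule: infinite_finite_induct)
  case (infinite A) then show ?case by (simp add: L2_def)
next
  case empty then show ?case by (simp add: L2_def)
next
  case (insert i F) then show ?case by (simp add: L2_add)
qed

lemma L2_phi: "L2 (\<lambda>x. \<phi> x \<bullet> u)" by (simp add: L2_def int_phi_sq')
lemma L2_phi': "L2 (\<lambda>x. u \<bullet> \<phi> x)" by (simp add: L2_def int_phi_sq)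

lemma L2_nn: assumes "f \<in> borel_measurable \<rho>" "(\<integral>\<^sup>+x. ennreal ((f x)\<^sup>2) \<partial>\<rho>) < \<infinity>" shows "L2 f"
  using assms unfolding L2_def by (subst integrable_iff_bounded) auto

lemma nn_L2: assumes "L2 f" shows "(\<integral>\<^sup>+x. ennreal ((f x)\<^sup>2) \<partial>\<rho>) = ennreal (\<integral>x. (f x)\<^sup>2 \<partial>\<rho>)"
  using assms by (intro nn_integral_eq_integral) (auto simp: L2_def)

end

locale kset2 = kset \<rho> \<phi> lam v C
  for \<rho> :: "'x measure" and \<phi> :: "'x \<Rightarrow> 'h::{real_inner,banach,second_countable_topology}"
    and lam v C +
  fixes a :: "nat \<Rightarrow> real" and s :: real and fstar :: "'x \<Rightarrow> real"
  assumes fsm[measurable]: "fstar \<in> borel_measurable \<rho>"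
    and fconv: "(\<lambda>n. \<integral>\<^sup>+z. ennreal ((fstar z - (\<Sum>j<n. a j * lam j powr ((s - 1) / 2) * (\<phi> z \<bullet> v j)))\<^sup>2) \<partial>\<rho>) \<longlonglongrightarrow> 0"
    and E0fin: "excess_risk lam v (theta_star a lam s) 0 < \<infinity>"
begin

definition "ts j = theta_star a lam s j"
definition "sn n x = (\<Sum>j<n. ts j * (\<phi> x \<bullet> v j))"
definition "dd \<theta> j = \<theta> \<bullet> v j - ts j"
definition "ee \<theta> j = (if 0 < lam j then dd \<theta> j else 0)"
definition "gg \<theta> x = \<theta> \<bullet> \<phi> x - fstar x"
definition "gn \<theta> n x = (\<Sum>j<n. ee \<theta> j * (\<phi> x \<bullet> v j))"
definition "SS \<theta> = (\<Sum>j. lam j * (dd \<theta> j)\<^sup>2)"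

lemma ts_zero: "lam j = 0 \<Longrightarrow> ts j = 0"
  by (simp add: ts_def theta_star_def)

lemma fconv': "(\<lambda>n. \<integral>\<^sup>+z. ennreal ((fstar z - sn n z)\<^sup>2) \<partial>\<rho>) \<longlonglongrightarrow> 0"
  using fconv by (simp add: sn_def ts_def theta_star_def)

lemma L2_sn: "L2 (sn n)"
  unfolding sn_def by (intro L2_sum L2_cmult L2_phi)

lemma L2_fstar: "L2 fstar"
proof -
  have "eventually (\<lambda>n. (\<integral>\<^sup>+z. ennreal ((fstar z - sn n z)\<^sup>2) \<partial>\<rho>) < 1) sequentially"
    using order_tendstoD(2)[OF fconv'] by simp
  then obtain n where "(\<integral>\<^sup>+z. ennreal ((fstar z - sn n z)\<^sup>2) \<partial>\<rho>) < 1"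
    by (auto simp: eventually_sequentially)
  then have "L2 (\<lambda>z. fstar z - sn n z)"
    using L2_sn[of n] by (intro L2_nn) (auto simp: L2_def less_trans[OF _ ennreal_one_less_top])
  from L2_add[OF this L2_sn[of n]] show ?thesis by simp
qed

lemma ts_summable: "summable (\<lambda>j. lam j * (ts j)\<^sup>2)"
proof -
  have "(\<Sum>j. ennreal (1/2 * lam j * (0 \<bullet> v j - ts j)\<^sup>2)) \<noteq> \<top>"
    using E0fin by (simp add: excess_risk_def ts_def)
  then have "summable (\<lambda>j. 1/2 * lam j * (0 \<bullet> v j - ts j)\<^sup>2)"
    by (intro summable_suminf_not_top) (auto intro: mult_nonneg_nonneg lam_nonneg)
  from summable_mult[OF this, of 2] show ?thesis by simp
qed

lemma quad_summable: "summable (\<lambda>i. lam i * (\<theta> \<bullet> v i)\<^sup>2)"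
  using quad[of \<theta>] by (rule sums_summable)

lemma SS_summable: "summable (\<lambda>j. lam j * (dd \<theta> j)\<^sup>2)"
proof (rule summable_comparison_test')
  show "summable (\<lambda>j. 2 * (lam j * (\<theta> \<bullet> v j)\<^sup>2) + 2 * (lam j * (ts j)\<^sup>2))"
    by (intro summable_add summable_mult quad_summable ts_summable)
  fix j
  have "(dd \<theta> j)\<^sup>2 \<le> 2 * (\<theta> \<bullet> v j)\<^sup>2 + 2 * (ts j)\<^sup>2"
    unfolding dd_def using sum_squares_ge_zero[of "\<theta> \<bullet> v j + ts j" 0]
    by (simp add: power2_eq_square algebra_simps)
  then have "lam j * (dd \<theta> j)\<^sup>2 \<le> lam j * (2 * (\<theta> \<bullet> v j)\<^sup>2 + 2 * (ts j)\<^sup>2)"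
    by (intro mult_left_mono lam_nonneg)
  then show "norm (lam j * (dd \<theta> j)\<^sup>2) \<le> 2 * (lam j * (\<theta> \<bullet> v j)\<^sup>2) + 2 * (lam j * (ts j)\<^sup>2)"
    using lam_nonneg[of j] by (simp add: algebra_simps)
qed

lemma SS_nonneg: "0 \<le> SS \<theta>"
proof -
  have "\<And>j. 0 \<le> lam j * (dd \<theta> j)\<^sup>2" by (rule mult_nonneg_nonneg[OF lam_nonneg zero_le_power2])
  then show ?thesis unfolding SS_def by (intro suminf_nonneg SS_summable) blast
qed

lemma excess_SS: "excess_risk lam v (theta_star a lam s) \<theta> = ennreal (SS \<theta> / 2)"
proof -
  have "excess_risk lam v (theta_star a lam s) \<theta> = (\<Sum>j. ennreal (1/2 * (lam j * (dd \<theta> j)\<^sup>2)))"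
    by (simp add: excess_risk_def dd_def ts_def mult.assoc)
  also have "\<dots> = ennreal (\<Sum>j. 1/2 * (lam j * (dd \<theta> j)\<^sup>2))"
    by (intro suminf_ennreal2 summable_mult SS_summable mult_nonneg_nonneg lam_nonneg zero_le_power2) simp
  also have "(\<Sum>j. 1/2 * (lam j * (dd \<theta> j)\<^sup>2)) = SS \<theta> / 2"
    unfolding SS_def by (subst suminf_mult[OF SS_summable]) simp
  finally show ?thesis .
qed

lemma L2_gg: "L2 (gg \<theta>)"
  unfolding gg_def by (intro L2_minus L2_phi' L2_fstar)

lemma L2_gn: "L2 (gn \<theta> n)"
  unfolding gn_def by (intro L2_sum L2_cmult L2_phi)

lemma gn_inner: "gn \<theta> n x = (\<Sum>j<n. ee \<theta> j *\<^sub>R v j) \<bullet> \<phi> x"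
  unfolding gn_def inner_sum_left inner_scaleR_left by (simp add: inner_commute)

lemma gn_split: "gn \<theta> n x = (\<Sum>j<n. (if 0 < lam j then \<theta> \<bullet> v j else 0) * (\<phi> x \<bullet> v j)) - sn n x"
proof -
  have "gn \<theta> n x = (\<Sum>j<n. (if 0 < lam j then \<theta> \<bullet> v j else 0) * (\<phi> x \<bullet> v j) - ts j * (\<phi> x \<bullet> v j))"
    unfolding gn_def
  proof (intro sum.cong refl)
    fix j
    show "ee \<theta> j * (\<phi> x \<bullet> v j) = (if 0 < lam j then \<theta> \<bullet> v j else 0) * (\<phi> x \<bullet> v j) - ts j * (\<phi> x \<bullet> v j)"
    proof (cases "0 < lam j")
      case True then show ?thesis by (simp add: ee_def dd_def algebra_simps)
    next
      case False then have "lam j = 0" using lam_nonneg[of j] by simp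
      then show ?thesis using False by (simp add: ee_def ts_zero)
    qed
  qed
  also have "\<dots> = (\<Sum>j<n. (if 0 < lam j then \<theta> \<bullet> v j else 0) * (\<phi> x \<bullet> v j)) - sn n x"
    unfolding sn_def by (rule sum_subtractf)
  finally show ?thesis .
qed

end


lemma sq_tendsto_zero: fixes f :: "nat \<Rightarrow> real" assumes "(\<lambda>n. (f n)\<^sup>2) \<longlonglongrightarrow> 0" shows "f \<longlonglongrightarrow> 0"
proof -
  have "(\<lambda>n. sqrt ((f n)\<^sup>2)) \<longlonglongrightarrow> sqrt 0" by (intro tendsto_real_sqrt assms)
  then have "(\<lambda>n. \<bar>f n\<bar>) \<longlonglongrightarrow> 0" by simp
  then show ?thesis by (simp add: tendsto_rabs_zero_iff)
qed

context kset2 begin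

definition "cc \<theta> j = (if 0 < lam j then \<theta> \<bullet> v j else 0)"
definition "tn \<theta> n x = (\<Sum>j<n. cc \<theta> j * (\<phi> x \<bullet> v j))"

lemma gn_split': "gn \<theta> n x = tn \<theta> n x - sn n x"
  using gn_split by (simp add: tn_def cc_def)

lemma L2_tn: "L2 (tn \<theta> n)" unfolding tn_def by (intro L2_sum L2_cmult L2_phi)

lemma tn_conv: "(\<lambda>n. \<integral>x. (\<theta> \<bullet> \<phi> x - tn \<theta> n x)\<^sup>2 \<partial>\<rho>) \<longlonglongrightarrow> 0"
proof -
  define q where "q i = lam i * (\<theta> \<bullet> v i)\<^sup>2" for i
  have qs: "summable q" unfolding q_def by (rule quad_summable)
  define u where "u n = \<theta> - (\<Sum>j<n. cc \<theta> j *\<^sub>R v j)" for n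
  have inn: "u n \<bullet> \<phi> x = \<theta> \<bullet> \<phi> x - tn \<theta> n x" for n x
    unfolding u_def tn_def inner_diff_left inner_sum_left inner_scaleR_left by (simp add: inner_commute)
  have coef: "lam i * (u n \<bullet> v i)\<^sup>2 = (if i < n then 0 else q i)" for n i
  proof (cases "lam i = 0")
    case True then show ?thesis by (simp add: q_def)
  next
    case False
    then have li: "0 < lam i" using lam_nonneg[of i] by simp
    have "(\<Sum>j<n. cc \<theta> j * (v j \<bullet> v i)) = (\<Sum>j<n. if j = i then \<theta> \<bullet> v i else 0)"
    proof (intro sum.cong refl)
      fix j show "cc \<theta> j * (v j \<bullet> v i) = (if j = i then \<theta> \<bullet> v i else 0)"
        using orth[of j i] li lam_nonneg[of j] by (cases "0 < lam j") (auto simp: cc_def)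
    qed
    also have "\<dots> = (if i < n then \<theta> \<bullet> v i else 0)" by simp
    finally have "u n \<bullet> v i = (if i < n then 0 else \<theta> \<bullet> v i)"
      unfolding u_def by (simp add: inner_diff_left inner_sum_left)
    then show ?thesis by (simp add: q_def)
  qed
  have "(\<lambda>i. if i \<in> {..<n} then 0 else q i) sums (suminf q + (\<Sum>i\<in>{..<n}. 0 - q i))" for n
    by (rule sums_If_finite_set'[OF summable_sums[OF qs]]) auto
  then have "(\<lambda>i. lam i * (u n \<bullet> v i)\<^sup>2) sums (suminf q - sum q {..<n})" for n
    by (simp add: coef sum_negf)
  then have eq: "(\<integral>x. (\<theta> \<bullet> \<phi> x - tn \<theta> n x)\<^sup>2 \<partial>\<rho>) = suminf q - sum q {..<n}" for n
    using quad[of "u n"] inn by (simp add: sums_unique2)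
  have "(\<lambda>n. suminf q - sum q {..<n}) \<longlonglongrightarrow> suminf q - suminf q"
    by (intro tendsto_diff tendsto_const summable_LIMSEQ qs)
  then show ?thesis by (simp add: eq)
qed

lemma gg_conv_nn: "(\<lambda>n. \<integral>\<^sup>+x. ennreal ((gg \<theta> x - gn \<theta> n x)\<^sup>2) \<partial>\<rho>) \<longlonglongrightarrow> 0"
proof (rule tendsto_sandwich[OF _ _ tendsto_const])
  define A where "A n x = \<theta> \<bullet> \<phi> x - tn \<theta> n x" for n x
  define B where "B n x = fstar x - sn n x" for n x
  have LA: "L2 (A n)" for n unfolding A_def by (intro L2_minus L2_phi' L2_tn)
  have LB: "L2 (B n)" for n unfolding B_def by (intro L2_minus L2_fstar L2_sn)
  have pt: "ennreal ((gg \<theta> x - gn \<theta> n x)\<^sup>2) \<le> 2 * ennreal ((A n x)\<^sup>2) + 2 * ennreal ((B n x)\<^sup>2)" for n x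
  proof -
    have e: "gg \<theta> x - gn \<theta> n x = A n x - B n x"
      by (simp add: A_def B_def gg_def gn_split')
    have "(A n x - B n x)\<^sup>2 \<le> 2 * (A n x)\<^sup>2 + 2 * (B n x)\<^sup>2"
      using sum_squares_ge_zero[of "A n x + B n x" 0] by (simp add: power2_eq_square algebra_simps)
    then have "ennreal ((A n x - B n x)\<^sup>2) \<le> ennreal (2 * (A n x)\<^sup>2 + 2 * (B n x)\<^sup>2)"
      by (rule ennreal_leI)
    also have "\<dots> = 2 * ennreal ((A n x)\<^sup>2) + 2 * ennreal ((B n x)\<^sup>2)"
      by (subst ennreal_plus) (auto simp: ennreal_mult ennreal_numeral)
    finally show ?thesis using e by simp
  qed
  have mA: "A n \<in> borel_measurable \<rho>" for n using LA L2_meas by blast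
  have mB: "B n \<in> borel_measurable \<rho>" for n using LB L2_meas by blast
  have int: "(\<integral>\<^sup>+x. 2 * ennreal ((A n x)\<^sup>2) + 2 * ennreal ((B n x)\<^sup>2) \<partial>\<rho>)
      = 2 * ennreal (\<integral>x. (A n x)\<^sup>2 \<partial>\<rho>) + 2 * ennreal (\<integral>x. (B n x)\<^sup>2 \<partial>\<rho>)" for n
    using mA[of n] mB[of n] nn_L2[OF LA[of n]] nn_L2[OF LB[of n]]
    by (subst nn_integral_add) (auto simp: nn_integral_cmult)
  have lA: "(\<lambda>n. \<integral>x. (A n x)\<^sup>2 \<partial>\<rho>) \<longlonglongrightarrow> 0" unfolding A_def by (rule tn_conv)
  have lB: "(\<lambda>n. ennreal (\<integral>x. (B n x)\<^sup>2 \<partial>\<rho>)) \<longlonglongrightarrow> 0"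
    using fconv' nn_L2[OF LB] unfolding B_def by simp
  have "(\<lambda>n. 2 * ennreal (\<integral>x. (A n x)\<^sup>2 \<partial>\<rho>) + 2 * ennreal (\<integral>x. (B n x)\<^sup>2 \<partial>\<rho>)) \<longlonglongrightarrow> 2 * ennreal 0 + 2 * 0"
    by (intro tendsto_add ennreal_tendsto_cmult tendsto_ennrealI lA lB) simp_all
  then show "(\<lambda>n. \<integral>\<^sup>+x. 2 * ennreal ((A n x)\<^sup>2) + 2 * ennreal ((B n x)\<^sup>2) \<partial>\<rho>) \<longlonglongrightarrow> 0"
    by (simp add: int)
  show "\<forall>\<^sub>F n in sequentially. 0 \<le> \<integral>\<^sup>+x. ennreal ((gg \<theta> x - gn \<theta> n x)\<^sup>2) \<partial>\<rho>" by simp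
  show "\<forall>\<^sub>F n in sequentially. (\<integral>\<^sup>+x. ennreal ((gg \<theta> x - gn \<theta> n x)\<^sup>2) \<partial>\<rho>)
      \<le> (\<integral>\<^sup>+x. 2 * ennreal ((A n x)\<^sup>2) + 2 * ennreal ((B n x)\<^sup>2) \<partial>\<rho>)"
    by (intro always_eventually allI nn_integral_mono pt)
qed

lemma L2_ggn: "L2 (\<lambda>x. gg \<theta> x - gn \<theta> n x)" by (intro L2_minus L2_gg L2_gn)

lemma gg_conv: "(\<lambda>n. \<integral>x. (gg \<theta> x - gn \<theta> n x)\<^sup>2 \<partial>\<rho>) \<longlonglongrightarrow> 0"
proof -
  have "(\<lambda>n. \<integral>\<^sup>+x. ennreal ((gg \<theta> x - gn \<theta> n x)\<^sup>2) \<partial>\<rho>) \<longlonglongrightarrow> ennreal 0"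
    using gg_conv_nn by simp
  from tendsto_enn2real[OF this]
  have "(\<lambda>n. enn2real (\<integral>\<^sup>+x. ennreal ((gg \<theta> x - gn \<theta> n x)\<^sup>2) \<partial>\<rho>)) \<longlonglongrightarrow> 0" by simp
  then show ?thesis using nn_L2[OF L2_ggn] by simp
qed

end


context kset2 begin

lemma ee_lam: "ee \<theta> j * lam j = lam j * dd \<theta> j"
  using lam_nonneg[of j] by (cases "0 < lam j") (auto simp: ee_def)

lemma ee_sq: "lam j * (ee \<theta> j)\<^sup>2 = lam j * (dd \<theta> j)\<^sup>2"
  using lam_nonneg[of j] by (cases "0 < lam j") (auto simp: ee_def)

lemma gn_phi: "(\<integral>x. gn \<theta> n x * (\<phi> x \<bullet> v j) \<partial>\<rho>) = (if j < n then lam j * dd \<theta> j else 0)"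
proof -
  have "(\<integral>x. gn \<theta> n x * (\<phi> x \<bullet> v j) \<partial>\<rho>) = (\<integral>x. (\<Sum>i<n. ee \<theta> i * ((\<phi> x \<bullet> v i) * (\<phi> x \<bullet> v j))) \<partial>\<rho>)"
    unfolding gn_def sum_distrib_right by (simp add: mult.assoc)
  also have "\<dots> = (\<Sum>i<n. (\<integral>x. ee \<theta> i * ((\<phi> x \<bullet> v i) * (\<phi> x \<bullet> v j)) \<partial>\<rho>))"
    by (intro Bochner_Integration.integral_sum Bochner_Integration.integrable_mult_right int_phi_prod')
  also have "\<dots> = (\<Sum>i<n. ee \<theta> i * (\<integral>x. (\<phi> x \<bullet> v i) * (\<phi> x \<bullet> v j) \<partial>\<rho>))"
    by simp
  also have "\<dots> = (\<Sum>i<n. if i = j then ee \<theta> j * lam j else 0)"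
    by (intro sum.cong refl) (simp add: phi_orth)
  also have "\<dots> = (if j < n then lam j * dd \<theta> j else 0)" by (simp add: ee_lam)
  finally show ?thesis .
qed

lemma gg_phi: "(\<integral>x. gg \<theta> x * (\<phi> x \<bullet> v j) \<partial>\<rho>) = lam j * dd \<theta> j"
proof -
  define D where "D n = (\<integral>x. (gg \<theta> x - gn \<theta> n x) * (\<phi> x \<bullet> v j) \<partial>\<rho>)" for n
  have D2: "(D n)\<^sup>2 \<le> (\<integral>x. (gg \<theta> x - gn \<theta> n x)\<^sup>2 \<partial>\<rho>) * lam j" for n
  proof -
    have "(D n)\<^sup>2 \<le> (\<integral>x. (gg \<theta> x - gn \<theta> n x)\<^sup>2 \<partial>\<rho>) * (\<integral>x. (\<phi> x \<bullet> v j)\<^sup>2 \<partial>\<rho>)"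
      unfolding D_def by (intro L2_CS L2_sq L2_ggn L2_phi L2_prod)
    then show ?thesis by (simp add: phi_sq_int)
  qed
  have "(\<lambda>n. (D n)\<^sup>2) \<longlonglongrightarrow> 0"
  proof (rule tendsto_sandwich[OF _ _ tendsto_const])
    show "\<forall>\<^sub>F n in sequentially. 0 \<le> (D n)\<^sup>2" by simp
    show "\<forall>\<^sub>F n in sequentially. (D n)\<^sup>2 \<le> (\<integral>x. (gg \<theta> x - gn \<theta> n x)\<^sup>2 \<partial>\<rho>) * lam j"
      using D2 by simp
    show "(\<lambda>n. (\<integral>x. (gg \<theta> x - gn \<theta> n x)\<^sup>2 \<partial>\<rho>) * lam j) \<longlonglongrightarrow> 0"
      using tendsto_mult_left_zero[OF gg_conv[of \<theta>], of "lam j"] by simp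
  qed
  then have D0: "D \<longlonglongrightarrow> 0" by (rule sq_tendsto_zero)
  have split: "(\<integral>x. gg \<theta> x * (\<phi> x \<bullet> v j) \<partial>\<rho>) = D n + (if j < n then lam j * dd \<theta> j else 0)" for n
  proof -
    have "D n = (\<integral>x. gg \<theta> x * (\<phi> x \<bullet> v j) \<partial>\<rho>) - (\<integral>x. gn \<theta> n x * (\<phi> x \<bullet> v j) \<partial>\<rho>)"
      unfolding D_def left_diff_distrib
      by (intro Bochner_Integration.integral_diff L2_prod L2_gg L2_gn L2_phi)
    then show ?thesis by (simp add: gn_phi)
  qed
  have "(\<lambda>n. D n + (if j < n then lam j * dd \<theta> j else 0)) \<longlonglongrightarrow> 0 + lam j * dd \<theta> j"
  proof (intro tendsto_add D0)
    have "eventually (\<lambda>n. (if j < n then lam j * dd \<theta> j else 0) = lam j * dd \<theta> j) sequentially"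
      using eventually_gt_at_top[of j] by eventually_elim simp
    then show "(\<lambda>n. if j < n then lam j * dd \<theta> j else 0) \<longlonglongrightarrow> lam j * dd \<theta> j"
      by (rule tendsto_eventually)
  qed
  then have "(\<lambda>n. \<integral>x. gg \<theta> x * (\<phi> x \<bullet> v j) \<partial>\<rho>) \<longlonglongrightarrow> lam j * dd \<theta> j"
    by (simp add: split[symmetric])
  then show ?thesis by (simp add: LIMSEQ_const_iff)
qed

lemma gn_sq_int: "(\<integral>x. (gn \<theta> n x)\<^sup>2 \<partial>\<rho>) = (\<Sum>i<n. lam i * (dd \<theta> i)\<^sup>2)"
proof -
  have "(\<integral>x. (gn \<theta> n x)\<^sup>2 \<partial>\<rho>) = (\<integral>x. (\<Sum>i<n. \<Sum>k<n. ee \<theta> i * ee \<theta> k * ((\<phi> x \<bullet> v i) * (\<phi> x \<bullet> v k))) \<partial>\<rho>)"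
    unfolding gn_def power2_eq_square sum_product
    by (intro Bochner_Integration.integral_cong sum.cong refl) (simp add: ac_simps)
  also have "\<dots> = (\<Sum>i<n. (\<integral>x. (\<Sum>k<n. ee \<theta> i * ee \<theta> k * ((\<phi> x \<bullet> v i) * (\<phi> x \<bullet> v k))) \<partial>\<rho>))"
    by (intro Bochner_Integration.integral_sum Bochner_Integration.integrable_sum
        Bochner_Integration.integrable_mult_right int_phi_prod')
  also have "\<dots> = (\<Sum>i<n. \<Sum>k<n. ee \<theta> i * ee \<theta> k * (\<integral>x. (\<phi> x \<bullet> v i) * (\<phi> x \<bullet> v k) \<partial>\<rho>))"
    by (intro sum.cong refl, subst Bochner_Integration.integral_sum)
      (auto intro!: Bochner_Integration.integrable_mult_right int_phi_prod')
  also have "\<dots> = (\<Sum>i<n. \<Sum>k<n. if i = k then lam i * (ee \<theta> i)\<^sup>2 else 0)"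
    by (intro sum.cong refl) (auto simp: phi_orth power2_eq_square)
  also have "\<dots> = (\<Sum>i<n. lam i * (dd \<theta> i)\<^sup>2)" by (simp add: ee_sq)
  finally show ?thesis .
qed

lemma gn_sq_le: "(\<integral>x. (gn \<theta> n x)\<^sup>2 \<partial>\<rho>) \<le> SS \<theta>"
  unfolding gn_sq_int SS_def
  by (intro sum_le_suminf SS_summable) (auto intro: mult_nonneg_nonneg lam_nonneg)

lemma ennC: "ennreal C = ennreal (max C 0)"
  by (cases "C \<le> 0") (auto simp: ennreal_neg max_def)

lemma hc_gn: "(\<integral>\<^sup>+x. ennreal ((gn \<theta> n x)\<^sup>2 * (\<phi> x \<bullet> v j)\<^sup>2) \<partial>\<rho>) \<le> ennreal (max C 0 * SS \<theta> * lam j)"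
proof -
  define U where "U = (\<Sum>i<n. ee \<theta> i *\<^sub>R v i)"
  have eU: "U \<bullet> \<phi> x = gn \<theta> n x" for x by (simp only: U_def gn_inner)
  have ev: "v j \<bullet> \<phi> x = \<phi> x \<bullet> v j" for x by (rule inner_commute)
  have "(\<integral>\<^sup>+x. ennreal ((U \<bullet> \<phi> x)\<^sup>2 * (v j \<bullet> \<phi> x)\<^sup>2) \<partial>\<rho>)
     \<le> ennreal C * (\<integral>\<^sup>+x. ennreal ((U \<bullet> \<phi> x)\<^sup>2) \<partial>\<rho>) * (\<integral>\<^sup>+x. ennreal ((v j \<bullet> \<phi> x)\<^sup>2) \<partial>\<rho>)"
    using hc unfolding hypercontractive_def by blast
  then have "(\<integral>\<^sup>+x. ennreal ((gn \<theta> n x)\<^sup>2 * (\<phi> x \<bullet> v j)\<^sup>2) \<partial>\<rho>)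
     \<le> ennreal C * (\<integral>\<^sup>+x. ennreal ((gn \<theta> n x)\<^sup>2) \<partial>\<rho>) * (\<integral>\<^sup>+x. ennreal ((\<phi> x \<bullet> v j)\<^sup>2) \<partial>\<rho>)"
    by (simp only: eU ev)
  also have "(\<integral>\<^sup>+x. ennreal ((gn \<theta> n x)\<^sup>2) \<partial>\<rho>) = ennreal (\<integral>x. (gn \<theta> n x)\<^sup>2 \<partial>\<rho>)"
    by (rule nn_L2[OF L2_gn])
  also have "(\<integral>\<^sup>+x. ennreal ((\<phi> x \<bullet> v j)\<^sup>2) \<partial>\<rho>) = ennreal (lam j)"
    using nn_L2[OF L2_phi[of "v j"]] by (simp only: phi_sq_int)
  also have "ennreal C = ennreal (max C 0)" by (rule ennC)
  also have "ennreal (max C 0) * ennreal (\<integral>x. (gn \<theta> n x)\<^sup>2 \<partial>\<rho>) * ennreal (lam j)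
      \<le> ennreal (max C 0) * ennreal (SS \<theta>) * ennreal (lam j)"
    by (intro mult_right_mono mult_left_mono ennreal_leI gn_sq_le) auto
  also have "\<dots> = ennreal (max C 0 * SS \<theta> * lam j)"
    using SS_nonneg[of \<theta>] lam_nonneg[of j] by (simp add: ennreal_mult)
  finally show ?thesis .
qed

lemma hc_gg: "(\<integral>\<^sup>+x. ennreal ((gg \<theta> x)\<^sup>2 * (\<phi> x \<bullet> v j)\<^sup>2) \<partial>\<rho>) \<le> ennreal (max C 0 * SS \<theta> * lam j)"
proof -
  define u where "u n x = (gg \<theta> x - gn \<theta> n x)\<^sup>2" for n x
  have ui: "integrable \<rho> (u n)" for n unfolding u_def by (rule L2_sq[OF L2_ggn])
  have "(\<lambda>n. \<integral>x. norm (u n x) \<partial>\<rho>) \<longlonglongrightarrow> 0" unfolding u_def using gg_conv by simp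
  from tendsto_L1_AE_subseq[OF ui this]
  obtain r :: "nat \<Rightarrow> nat" where r: "strict_mono r" and ae: "AE x in \<rho>. (\<lambda>n. u (r n) x) \<longlonglongrightarrow> 0"
    by blast
  have ae2: "AE x in \<rho>. (\<lambda>n. ennreal ((gn \<theta> (r n) x)\<^sup>2 * (\<phi> x \<bullet> v j)\<^sup>2)) \<longlonglongrightarrow> ennreal ((gg \<theta> x)\<^sup>2 * (\<phi> x \<bullet> v j)\<^sup>2)"
    using ae
  proof eventually_elim
    case (elim x)
    then have "(\<lambda>n. gg \<theta> x - gn \<theta> (r n) x) \<longlonglongrightarrow> 0" unfolding u_def by (rule sq_tendsto_zero)
    then have "(\<lambda>n. gg \<theta> x - (gg \<theta> x - gn \<theta> (r n) x)) \<longlonglongrightarrow> gg \<theta> x - 0"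
      by (intro tendsto_diff tendsto_const)
    then have "(\<lambda>n. gn \<theta> (r n) x) \<longlonglongrightarrow> gg \<theta> x" by simp
    then show ?case by (intro tendsto_ennrealI tendsto_intros)
  qed
  have "(\<integral>\<^sup>+x. ennreal ((gg \<theta> x)\<^sup>2 * (\<phi> x \<bullet> v j)\<^sup>2) \<partial>\<rho>)
      = (\<integral>\<^sup>+x. liminf (\<lambda>n. ennreal ((gn \<theta> (r n) x)\<^sup>2 * (\<phi> x \<bullet> v j)\<^sup>2)) \<partial>\<rho>)"
  proof (rule nn_integral_cong_AE)
    show "AE x in \<rho>. ennreal ((gg \<theta> x)\<^sup>2 * (\<phi> x \<bullet> v j)\<^sup>2) = liminf (\<lambda>n. ennreal ((gn \<theta> (r n) x)\<^sup>2 * (\<phi> x \<bullet> v j)\<^sup>2))"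
      using ae2
    proof eventually_elim
      case (elim x) show ?case by (rule sym, rule lim_imp_Liminf[OF sequentially_bot elim])
    qed
  qed
  also have "\<dots> \<le> liminf (\<lambda>n. \<integral>\<^sup>+x. ennreal ((gn \<theta> (r n) x)\<^sup>2 * (\<phi> x \<bullet> v j)\<^sup>2) \<partial>\<rho>)"
    by (intro nn_integral_liminf) (use L2_gn L2_meas in auto)
  also have "\<dots> \<le> limsup (\<lambda>n. \<integral>\<^sup>+x. ennreal ((gn \<theta> (r n) x)\<^sup>2 * (\<phi> x \<bullet> v j)\<^sup>2) \<partial>\<rho>)"
    by (rule Liminf_le_Limsup) simp
  also have "\<dots> \<le> ennreal (max C 0 * SS \<theta> * lam j)"
    by (intro Limsup_bounded always_eventually allI hc_gn)
  finally show ?thesis .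
qed

end


lemma gauss:
  fixes \<sigma> A c :: real
  assumes \<sigma>: "0 < \<sigma>"
  shows "(\<integral>\<^sup>+e. ennreal ((A + c * e)\<^sup>2) \<partial>density lborel (normal_density 0 \<sigma>)) = ennreal (A\<^sup>2 + c\<^sup>2 * \<sigma>\<^sup>2)"
proof -
  let ?n = "normal_density 0 \<sigma>"
  have i0: "integrable lborel (\<lambda>x. ?n x * (x - 0) ^ 0)" by (rule integrable_normal_moment[OF \<sigma>])
  have i1: "integrable lborel (\<lambda>x. ?n x * (x - 0) ^ 1)" by (rule integrable_normal_moment[OF \<sigma>])
  have i2: "integrable lborel (\<lambda>x. ?n x * (x - 0) ^ 2)" by (rule integrable_normal_moment[OF \<sigma>])
  have v0: "(\<integral>x. ?n x \<partial>lborel) = 1"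
    using integral_normal_moment_even[OF \<sigma>, of 0 0] by simp
  have v1: "(\<integral>x. ?n x * x \<partial>lborel) = 0"
    using integral_normal_moment_odd[OF \<sigma>, of 0 0] by simp
  have v2: "(\<integral>x. ?n x * x\<^sup>2 \<partial>lborel) = \<sigma>\<^sup>2"
    using integral_normal_moment_even[OF \<sigma>, of 0 1] by (simp add: eval_nat_numeral)
  have eq: "(\<lambda>x. ?n x * (A + c * x)\<^sup>2) = (\<lambda>x. A\<^sup>2 * ?n x + (2 * A * c) * (?n x * x) + c\<^sup>2 * (?n x * x\<^sup>2))"
    by (rule ext) (simp add: power2_eq_square algebra_simps)
  have int: "integrable lborel (\<lambda>x. ?n x * (A + c * x)\<^sup>2)"
    unfolding eq using i0 i1 i2 by simp
  have "(\<integral>\<^sup>+e. ennreal ((A + c * e)\<^sup>2) \<partial>density lborel ?n) = (\<integral>\<^sup>+e. ennreal (?n e) * ennreal ((A + c * e)\<^sup>2) \<partial>lborel)"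
    by (subst nn_integral_density) auto
  also have "\<dots> = (\<integral>\<^sup>+e. ennreal (?n e * (A + c * e)\<^sup>2) \<partial>lborel)"
    by (intro nn_integral_cong) (simp add: ennreal_mult)
  also have "\<dots> = ennreal (\<integral>e. ?n e * (A + c * e)\<^sup>2 \<partial>lborel)"
    by (intro nn_integral_eq_integral int) auto
  also have "(\<integral>e. ?n e * (A + c * e)\<^sup>2 \<partial>lborel) = A\<^sup>2 + c\<^sup>2 * \<sigma>\<^sup>2"
    unfolding eq using i0 i1 i2 v0 v1 v2 by simp
  finally show ?thesis .
qed

context kset2 begin

definition "upd \<eta> \<theta> x e = \<theta> - (\<eta> * (\<theta> \<bullet> \<phi> x - (fstar x + e))) *\<^sub>R \<phi> x"
definition "Gf \<alpha> n \<eta> \<theta> z = (\<Sum>j<n. ennreal (\<alpha> j * (upd \<eta> \<theta> (fst z) (snd z) \<bullet> v j - ts j)\<^sup>2))"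

lemma upd_coord: "upd \<eta> \<theta> x e \<bullet> v j - ts j = (dd \<theta> j - \<eta> * (gg \<theta> x * (\<phi> x \<bullet> v j))) + (\<eta> * (\<phi> x \<bullet> v j)) * e"
  by (simp add: upd_def dd_def gg_def inner_diff_left algebra_simps)

lemma L2_const: "L2 (\<lambda>x. c)" by (simp add: L2_def)

lemma L2_ggphi: "L2 (\<lambda>x. gg \<theta> x * (\<phi> x \<bullet> v j))"
proof (rule L2_nn)
  show "(\<lambda>x. gg \<theta> x * (\<phi> x \<bullet> v j)) \<in> borel_measurable \<rho>"
    using L2_meas[OF L2_gg] by (intro borel_measurable_times) auto
  have "(\<integral>\<^sup>+x. ennreal ((gg \<theta> x * (\<phi> x \<bullet> v j))\<^sup>2) \<partial>\<rho>) = (\<integral>\<^sup>+x. ennreal ((gg \<theta> x)\<^sup>2 * (\<phi> x \<bullet> v j)\<^sup>2) \<partial>\<rho>)"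
    by (simp add: power_mult_distrib)
  also have "\<dots> \<le> ennreal (max C 0 * SS \<theta> * lam j)" by (rule hc_gg)
  also have "\<dots> < \<infinity>" by simp
  finally show "(\<integral>\<^sup>+x. ennreal ((gg \<theta> x * (\<phi> x \<bullet> v j))\<^sup>2) \<partial>\<rho>) < \<infinity>" .
qed

lemma ggphi_sq_le: "(\<integral>x. (gg \<theta> x * (\<phi> x \<bullet> v j))\<^sup>2 \<partial>\<rho>) \<le> max C 0 * SS \<theta> * lam j"
proof -
  have "ennreal (\<integral>x. (gg \<theta> x * (\<phi> x \<bullet> v j))\<^sup>2 \<partial>\<rho>) = (\<integral>\<^sup>+x. ennreal ((gg \<theta> x)\<^sup>2 * (\<phi> x \<bullet> v j)\<^sup>2) \<partial>\<rho>)"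
    using nn_L2[OF L2_ggphi[of \<theta> j]] by (simp add: power_mult_distrib)
  also have "\<dots> \<le> ennreal (max C 0 * SS \<theta> * lam j)" by (rule hc_gg)
  finally show ?thesis
    using SS_nonneg[of \<theta>] lam_nonneg[of j] by (subst (asm) ennreal_le_iff) (auto)
qed

lemma L2_Aj: "L2 (\<lambda>x. dd \<theta> j - \<eta> * (gg \<theta> x * (\<phi> x \<bullet> v j)))"
  by (intro L2_minus L2_const L2_cmult L2_ggphi)

lemma Aj_int: "(\<integral>x. (dd \<theta> j - \<eta> * (gg \<theta> x * (\<phi> x \<bullet> v j)))\<^sup>2 \<partial>\<rho>)
   \<le> (1 - \<eta> * lam j)\<^sup>2 * (dd \<theta> j)\<^sup>2 + \<eta>\<^sup>2 * (max C 0 * SS \<theta> * lam j)"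
proof -
  let ?g = "\<lambda>x. gg \<theta> x * (\<phi> x \<bullet> v j)"
  have ig: "integrable \<rho> ?g" using L2_prod[OF L2_gg L2_phi] .
  have ig2: "integrable \<rho> (\<lambda>x. (?g x)\<^sup>2)" using L2_sq[OF L2_ggphi] .
  have "(\<integral>x. (dd \<theta> j - \<eta> * ?g x)\<^sup>2 \<partial>\<rho>) = (\<integral>x. (dd \<theta> j)\<^sup>2 - (2 * \<eta> * dd \<theta> j) * ?g x + \<eta>\<^sup>2 * (?g x)\<^sup>2 \<partial>\<rho>)"
    by (intro Bochner_Integration.integral_cong refl) (simp add: power2_eq_square algebra_simps)
  also have "\<dots> = (dd \<theta> j)\<^sup>2 - (2 * \<eta> * dd \<theta> j) * (\<integral>x. ?g x \<partial>\<rho>) + \<eta>\<^sup>2 * (\<integral>x. (?g x)\<^sup>2 \<partial>\<rho>)"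
    using ig ig2 by (simp add: P.prob_space)
  also have "(\<integral>x. ?g x \<partial>\<rho>) = lam j * dd \<theta> j" by (rule gg_phi)
  finally have e: "(\<integral>x. (dd \<theta> j - \<eta> * ?g x)\<^sup>2 \<partial>\<rho>) = (dd \<theta> j)\<^sup>2 - 2 * \<eta> * lam j * (dd \<theta> j)\<^sup>2 + \<eta>\<^sup>2 * (\<integral>x. (?g x)\<^sup>2 \<partial>\<rho>)"
    by (simp add: power2_eq_square algebra_simps)
  have "\<eta>\<^sup>2 * (\<integral>x. (?g x)\<^sup>2 \<partial>\<rho>) \<le> \<eta>\<^sup>2 * (max C 0 * SS \<theta> * lam j)"
    by (intro mult_left_mono ggphi_sq_le) simp
  moreover have "(dd \<theta> j)\<^sup>2 - 2 * \<eta> * lam j * (dd \<theta> j)\<^sup>2 \<le> (1 - \<eta> * lam j)\<^sup>2 * (dd \<theta> j)\<^sup>2"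
  proof -
    have "0 \<le> (\<eta> * lam j)\<^sup>2 * (dd \<theta> j)\<^sup>2" by simp
    then show ?thesis by (simp add: power2_eq_square algebra_simps)
  qed
  ultimately show ?thesis using e by linarith
qed


lemma Gf_meas[measurable]: "Gf \<alpha> n \<eta> \<theta> \<in> borel_measurable (\<rho> \<Otimes>\<^sub>M density lborel (normal_density 0 \<sigma>))"
  unfolding Gf_def upd_def by measurable

lemma Gf_meas'[measurable]: "(\<lambda>z. Gf \<alpha> n \<eta> (fst z) (snd z)) \<in> borel_measurable (borel \<Otimes>\<^sub>M (\<rho> \<Otimes>\<^sub>M borel))"
  unfolding Gf_def upd_def by measurable

lemma one_step:
  assumes \<sigma>: "0 < \<sigma>" and \<alpha>: "\<And>j. 0 \<le> \<alpha> j"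
  shows "(\<integral>\<^sup>+z. Gf \<alpha> n \<eta> \<theta> z \<partial>(\<rho> \<Otimes>\<^sub>M density lborel (normal_density 0 \<sigma>)))
    \<le> ennreal (\<Sum>j<n. \<alpha> j * ((1 - \<eta> * lam j)\<^sup>2 * (dd \<theta> j)\<^sup>2 + \<eta>\<^sup>2 * (max C 0 * SS \<theta> + \<sigma>\<^sup>2) * lam j))"
proof -
  let ?N = "density lborel (normal_density 0 \<sigma>)"
  interpret N: prob_space ?N by (rule prob_space_normal_density[OF \<sigma>])
  define A where "A j x = dd \<theta> j - \<eta> * (gg \<theta> x * (\<phi> x \<bullet> v j))" for j x
  define c where "c j x = \<eta> * (\<phi> x \<bullet> v j)" for j x
  have mA[measurable]: "A j \<in> borel_measurable \<rho>" for j unfolding A_def by (rule L2_meas[OF L2_Aj])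
  have mc[measurable]: "c j \<in> borel_measurable \<rho>" for j unfolding c_def by (rule L2_meas[OF L2_cmult[OF L2_phi]])
  have inner: "(\<integral>\<^sup>+e. Gf \<alpha> n \<eta> \<theta> (x, e) \<partial>?N) = (\<Sum>j<n. ennreal (\<alpha> j * ((A j x)\<^sup>2 + (c j x)\<^sup>2 * \<sigma>\<^sup>2)))" for x
  proof -
    have "(\<integral>\<^sup>+e. Gf \<alpha> n \<eta> \<theta> (x, e) \<partial>?N) = (\<integral>\<^sup>+e. (\<Sum>j<n. ennreal (\<alpha> j) * ennreal ((A j x + c j x * e)\<^sup>2)) \<partial>?N)"
      unfolding Gf_def by (intro nn_integral_cong sum.cong refl) (simp add: upd_coord A_def c_def ennreal_mult \<alpha>)
    also have "\<dots> = (\<Sum>j<n. \<integral>\<^sup>+e. ennreal (\<alpha> j) * ennreal ((A j x + c j x * e)\<^sup>2) \<partial>?N)"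
      by (intro nn_integral_sum) auto
    also have "\<dots> = (\<Sum>j<n. ennreal (\<alpha> j) * ennreal ((A j x)\<^sup>2 + (c j x)\<^sup>2 * \<sigma>\<^sup>2))"
      by (intro sum.cong refl) (simp add: nn_integral_cmult gauss[OF \<sigma>])
    also have "\<dots> = (\<Sum>j<n. ennreal (\<alpha> j * ((A j x)\<^sup>2 + (c j x)\<^sup>2 * \<sigma>\<^sup>2)))"
      by (intro sum.cong refl) (simp add: ennreal_mult \<alpha>)
    finally show ?thesis .
  qed
  have "(\<integral>\<^sup>+z. Gf \<alpha> n \<eta> \<theta> z \<partial>(\<rho> \<Otimes>\<^sub>M ?N)) = (\<integral>\<^sup>+x. \<integral>\<^sup>+e. Gf \<alpha> n \<eta> \<theta> (x, e) \<partial>?N \<partial>\<rho>)"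
    by (rule N.nn_integral_fst[symmetric]) measurable
  also have "\<dots> = (\<integral>\<^sup>+x. (\<Sum>j<n. ennreal (\<alpha> j * ((A j x)\<^sup>2 + (c j x)\<^sup>2 * \<sigma>\<^sup>2))) \<partial>\<rho>)"
    by (simp add: inner)
  also have "\<dots> = (\<Sum>j<n. \<integral>\<^sup>+x. ennreal (\<alpha> j * ((A j x)\<^sup>2 + (c j x)\<^sup>2 * \<sigma>\<^sup>2)) \<partial>\<rho>)"
    by (intro nn_integral_sum) measurable
  also have "\<dots> \<le> (\<Sum>j<n. ennreal (\<alpha> j * ((1 - \<eta> * lam j)\<^sup>2 * (dd \<theta> j)\<^sup>2 + \<eta>\<^sup>2 * (max C 0 * SS \<theta> + \<sigma>\<^sup>2) * lam j)))"
  proof (intro sum_mono)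
    fix j
    have LA: "L2 (A j)" unfolding A_def by (rule L2_Aj)
    have Lc: "L2 (c j)" unfolding c_def by (intro L2_cmult L2_phi)
    have int: "integrable \<rho> (\<lambda>x. \<alpha> j * ((A j x)\<^sup>2 + (c j x)\<^sup>2 * \<sigma>\<^sup>2))"
      using L2_sq[OF LA] L2_sq[OF Lc] by simp
    have nn: "(\<integral>\<^sup>+x. ennreal (\<alpha> j * ((A j x)\<^sup>2 + (c j x)\<^sup>2 * \<sigma>\<^sup>2)) \<partial>\<rho>)
        = ennreal (\<integral>x. \<alpha> j * ((A j x)\<^sup>2 + (c j x)\<^sup>2 * \<sigma>\<^sup>2) \<partial>\<rho>)"
      using \<alpha>[of j] by (intro nn_integral_eq_integral int) auto
    have "(\<integral>x. \<alpha> j * ((A j x)\<^sup>2 + (c j x)\<^sup>2 * \<sigma>\<^sup>2) \<partial>\<rho>)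
        = \<alpha> j * ((\<integral>x. (A j x)\<^sup>2 \<partial>\<rho>) + \<eta>\<^sup>2 * \<sigma>\<^sup>2 * lam j)"
    proof -
      have i1: "integrable \<rho> (\<lambda>x. (A j x)\<^sup>2)" using L2_sq[OF LA] .
      have i2: "integrable \<rho> (\<lambda>x. (c j x)\<^sup>2 * \<sigma>\<^sup>2)" using L2_sq[OF Lc] by simp
      have e2: "(\<integral>x. (c j x)\<^sup>2 * \<sigma>\<^sup>2 \<partial>\<rho>) = \<eta>\<^sup>2 * \<sigma>\<^sup>2 * lam j"
      proof -
        have "(\<integral>x. (c j x)\<^sup>2 * \<sigma>\<^sup>2 \<partial>\<rho>) = (\<integral>x. (\<eta>\<^sup>2 * \<sigma>\<^sup>2) * (\<phi> x \<bullet> v j)\<^sup>2 \<partial>\<rho>)"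
          by (simp add: c_def power_mult_distrib ac_simps)
        also have "\<dots> = (\<eta>\<^sup>2 * \<sigma>\<^sup>2) * (\<integral>x. (\<phi> x \<bullet> v j)\<^sup>2 \<partial>\<rho>)" by simp
        finally show ?thesis by (simp add: phi_sq_int)
      qed
      have "(\<integral>x. \<alpha> j * ((A j x)\<^sup>2 + (c j x)\<^sup>2 * \<sigma>\<^sup>2) \<partial>\<rho>) = \<alpha> j * (\<integral>x. (A j x)\<^sup>2 + (c j x)\<^sup>2 * \<sigma>\<^sup>2 \<partial>\<rho>)"
        by simp
      also have "(\<integral>x. (A j x)\<^sup>2 + (c j x)\<^sup>2 * \<sigma>\<^sup>2 \<partial>\<rho>) = (\<integral>x. (A j x)\<^sup>2 \<partial>\<rho>) + (\<integral>x. (c j x)\<^sup>2 * \<sigma>\<^sup>2 \<partial>\<rho>)"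
        by (rule Bochner_Integration.integral_add[OF i1 i2])
      finally show ?thesis unfolding e2 .
    qed
    also have "\<dots> \<le> \<alpha> j * ((1 - \<eta> * lam j)\<^sup>2 * (dd \<theta> j)\<^sup>2 + \<eta>\<^sup>2 * (max C 0 * SS \<theta> + \<sigma>\<^sup>2) * lam j)"
      using Aj_int[of \<theta> j \<eta>] \<alpha>[of j] unfolding A_def
      by (intro mult_left_mono) (auto simp: algebra_simps)
    finally show "(\<integral>\<^sup>+x. ennreal (\<alpha> j * ((A j x)\<^sup>2 + (c j x)\<^sup>2 * \<sigma>\<^sup>2)) \<partial>\<rho>)
        \<le> ennreal (\<alpha> j * ((1 - \<eta> * lam j)\<^sup>2 * (dd \<theta> j)\<^sup>2 + \<eta>\<^sup>2 * (max C 0 * SS \<theta> + \<sigma>\<^sup>2) * lam j))"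
      unfolding nn by (rule ennreal_leI)
  qed
  also have "\<dots> = ennreal (\<Sum>j<n. \<alpha> j * ((1 - \<eta> * lam j)\<^sup>2 * (dd \<theta> j)\<^sup>2 + \<eta>\<^sup>2 * (max C 0 * SS \<theta> + \<sigma>\<^sup>2) * lam j))"
    using \<alpha> SS_nonneg[of \<theta>] lam_nonneg by (intro sum_ennreal) (auto intro!: mult_nonneg_nonneg add_nonneg_nonneg)
  finally show ?thesis .
qed

end


lemma sgd_local:
  "(\<And>i. i < k \<Longrightarrow> xs i = xs' i \<and> ys i = ys' i) \<Longrightarrow> sgd_iter \<eta> \<phi> xs ys k = sgd_iter \<eta> \<phi> xs' ys' k"
  by (induction k) auto

locale kset3 = kset2 \<rho> \<phi> lam v C a s fstar
  for \<rho> :: "'x measure" and \<phi> :: "'x \<Rightarrow> 'h::{real_inner,banach,second_countable_topology}"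
    and lam v C a s fstar +
  fixes P :: "'w measure" and xx :: "nat \<Rightarrow> 'w \<Rightarrow> 'x" and eps :: "nat \<Rightarrow> 'w \<Rightarrow> real"
    and \<sigma> :: real and \<eta> :: "nat \<Rightarrow> real"
  assumes Pp: "prob_space P" and sig: "0 < \<sigma>"
    and ind: "prob_space.indep_vars P (\<lambda>_. \<rho> \<Otimes>\<^sub>M borel) (\<lambda>k w. (xx k w, eps k w)) UNIV"
    and dis: "\<And>k. distr P (\<rho> \<Otimes>\<^sub>M borel) (\<lambda>w. (xx k w, eps k w)) = \<rho> \<Otimes>\<^sub>M density lborel (normal_density 0 \<sigma>)"
begin

sublocale Q: prob_space P by (rule Pp)

definition "Z k w = (xx k w, eps k w)"
definition "th k w = sgd_iter \<eta> \<phi> (\<lambda>i. xx i w) (\<lambda>i. fstar (xx i w) + eps i w) k"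
definition "Th k t = sgd_iter \<eta> \<phi> (\<lambda>i. fst (t i)) (\<lambda>i. fstar (fst (t i)) + snd (t i)) k"

abbreviation "M' \<equiv> \<rho> \<Otimes>\<^sub>M borel"

lemma Th_meas: "{..<k} \<subseteq> I \<Longrightarrow> Th k \<in> borel_measurable (PiM I (\<lambda>_. M'))"
proof (induction k)
  case 0 then show ?case by (simp add: Th_def)
next
  case (Suc k)
  have "{..<k} \<subseteq> I" using Suc.prems by auto
  then have IH[measurable]: "Th k \<in> borel_measurable (PiM I (\<lambda>_. M'))" by (rule Suc.IH)
  have kI: "k \<in> I" using Suc by auto
  have [measurable]: "(\<lambda>t. t k) \<in> measurable (PiM I (\<lambda>_. M')) M'"
    by (rule measurable_component_singleton[OF kI])
  have e: "Th (Suc k) = (\<lambda>t. Th k t - (\<eta> k * (Th k t \<bullet> \<phi> (fst (t k)) - (fstar (fst (t k)) + snd (t k)))) *\<^sub>R \<phi> (fst (t k)))"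
    by (rule ext) (simp add: Th_def)
  show ?case unfolding e by measurable
qed

lemma th_Th: "th k w = Th k (restrict (\<lambda>i. Z i w) {..<k})"
  unfolding th_def Th_def by (rule sgd_local) (auto simp: Z_def)

lemma th_Suc: "th (Suc k) w = upd (\<eta> k) (th k w) (xx k w) (eps k w)"
  by (simp add: th_def upd_def)

definition "R1 k w = restrict (\<lambda>i. Z i w) {..<k}"
definition "R2 k w = restrict (\<lambda>i. Z i w) {k}"
abbreviation "PA k \<equiv> PiM {..<k} (\<lambda>_. M')"
abbreviation "PB k \<equiv> PiM {k} (\<lambda>_. M')"

lemma indep_step: "Q.indep_var (PA k) (R1 k) (PB k) (R2 k)"
proof -
  have ind': "Q.indep_vars (\<lambda>_. M') Z UNIV" using ind unfolding Z_def[abs_def] by simp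
  show ?thesis unfolding R1_def[abs_def] R2_def[abs_def]
    by (rule Q.indep_var_restrict[OF ind']) auto
qed

lemma R1_meas[measurable]: "R1 k \<in> measurable P (PA k)"
  using Q.indep_var_rv1[OF indep_step] .
lemma R2_meas[measurable]: "R2 k \<in> measurable P (PB k)"
  using Q.indep_var_rv2[OF indep_step] .

lemma th_R1: "th k w = Th k (R1 k w)" by (simp add: th_Th R1_def)
lemma Z_R2: "Z k w = R2 k w k" by (simp add: R2_def)

lemma Th_meas'[measurable]: "Th k \<in> borel_measurable (PA k)" by (rule Th_meas) simp

lemma th_meas[measurable]: "th k \<in> borel_measurable P"
proof -
  have "(\<lambda>w. Th k (R1 k w)) \<in> borel_measurable P" by measurable
  then show ?thesis by (simp add: th_R1[abs_def])
qed

lemma Z_meas[measurable]: "Z k \<in> measurable P M'"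
proof -
  have "(\<lambda>w. R2 k w k) \<in> measurable P M'"
    by (rule measurable_compose[OF R2_meas measurable_component_singleton]) simp
  then show ?thesis by (simp add: Z_R2[abs_def])
qed

lemma exp_split:
  assumes Fm: "(\<lambda>z. F (fst z) (snd z)) \<in> borel_measurable (borel \<Otimes>\<^sub>M M')"
  shows "(\<integral>\<^sup>+w. F (th k w) (Z k w) \<partial>P) = (\<integral>\<^sup>+w. (\<integral>\<^sup>+z. F (th k w) z \<partial>(\<rho> \<Otimes>\<^sub>M density lborel (normal_density 0 \<sigma>))) \<partial>P)"
proof -
  let ?N = "\<rho> \<Otimes>\<^sub>M density lborel (normal_density 0 \<sigma>)"
  let ?D1 = "distr P (PA k) (R1 k)"
  let ?D2 = "distr P (PB k) (R2 k)"
  have dZ: "distr P M' (Z k) = ?N" using dis by (simp add: Z_def[abs_def])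
  interpret D2: prob_space ?D2 by (rule Q.prob_space_distr) simp
  have jd: "?D1 \<Otimes>\<^sub>M ?D2 = distr P (PA k \<Otimes>\<^sub>M PB k) (\<lambda>w. (R1 k w, R2 k w))"
    using indep_step[of k] unfolding Q.indep_var_distribution_eq by simp
  define G where "G p = F (Th k (fst p)) (snd p k)" for p
  have mp: "(\<lambda>p. (Th k (fst p), snd p k)) \<in> measurable (PA k \<Otimes>\<^sub>M PB k) (borel \<Otimes>\<^sub>M M')"
    by (intro measurable_Pair measurable_compose[OF measurable_fst Th_meas']
        measurable_compose[OF measurable_snd measurable_component_singleton]) simp
  have Gm: "G \<in> borel_measurable (PA k \<Otimes>\<^sub>M PB k)"
    unfolding G_def using measurable_compose[OF mp Fm] by simp
  have Gm': "G \<in> borel_measurable (?D1 \<Otimes>\<^sub>M ?D2)"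
    using Gm by (subst measurable_cong_sets[OF sets_pair_measure_cong[OF sets_distr sets_distr] refl]) auto
  have "(\<integral>\<^sup>+w. F (th k w) (Z k w) \<partial>P) = (\<integral>\<^sup>+w. G (R1 k w, R2 k w) \<partial>P)"
    by (simp add: G_def th_R1 Z_R2)
  also have "\<dots> = (\<integral>\<^sup>+p. G p \<partial>distr P (PA k \<Otimes>\<^sub>M PB k) (\<lambda>w. (R1 k w, R2 k w)))"
    by (subst nn_integral_distr) (auto simp: Gm)
  also have "\<dots> = (\<integral>\<^sup>+p. G p \<partial>(?D1 \<Otimes>\<^sub>M ?D2))" by (simp add: jd)
  also have "\<dots> = (\<integral>\<^sup>+t1. \<integral>\<^sup>+t2. G (t1, t2) \<partial>?D2 \<partial>?D1)"
    using D2.nn_integral_fst[OF Gm'] by simp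
  also have "\<dots> = (\<integral>\<^sup>+t1. \<integral>\<^sup>+z. F (Th k t1) z \<partial>?N \<partial>?D1)"
  proof (intro nn_integral_cong)
    fix t1
    have Ft: "F (Th k t1) \<in> borel_measurable M'"
      using measurable_Pair2[OF Fm, of "Th k t1"] by simp
    have "(\<integral>\<^sup>+t2. G (t1, t2) \<partial>?D2) = (\<integral>\<^sup>+w. F (Th k t1) (R2 k w k) \<partial>P)"
      unfolding G_def
      by (subst nn_integral_distr) (auto intro!: measurable_compose[OF measurable_component_singleton[of k "{k}" "\<lambda>_. M'"] Ft])
    also have "\<dots> = (\<integral>\<^sup>+w. F (Th k t1) (Z k w) \<partial>P)" by (simp add: Z_R2)
    also have "\<dots> = (\<integral>\<^sup>+z. F (Th k t1) z \<partial>distr P M' (Z k))"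
      by (subst nn_integral_distr) (auto simp: Ft)
    finally show "(\<integral>\<^sup>+t2. G (t1, t2) \<partial>?D2) = (\<integral>\<^sup>+z. F (Th k t1) z \<partial>?N)" by (simp add: dZ)
  qed
  also have "\<dots> = (\<integral>\<^sup>+w. (\<integral>\<^sup>+z. F (Th k (R1 k w)) z \<partial>?N) \<partial>P)"
  proof (subst nn_integral_distr)
    interpret N: prob_space ?N using Q.prob_space_distr[OF Z_meas[of k]] dZ by simp
    have Fm2: "(\<lambda>z. F (fst z) (snd z)) \<in> borel_measurable (borel \<Otimes>\<^sub>M ?N)"
      using Fm by (subst measurable_cong_sets[OF sets_pair_measure_cong[OF refl sets_pair_measure_cong] refl]) auto
    have Hm: "(\<lambda>t. \<integral>\<^sup>+z. F t z \<partial>?N) \<in> borel_measurable borel"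
      using N.borel_measurable_nn_integral_fst[OF Fm2] by simp
    show "(\<lambda>t1. \<integral>\<^sup>+z. F (Th k t1) z \<partial>?N) \<in> borel_measurable (distr P (PA k) (R1 k))"
      by (intro measurable_compose[OF _ Hm]) simp
  qed simp_all
  finally show ?thesis by (simp add: th_R1)
qed

end


context kset3 begin

definition "ER \<theta> = excess_risk lam v (theta_star a lam s) \<theta>"
definition "Fk k \<alpha> n = (\<integral>\<^sup>+w. (\<Sum>j<n. ennreal (\<alpha> j * (dd (th k w) j)\<^sup>2)) \<partial>P)"

lemma ER_meas[measurable]: "ER \<in> borel_measurable borel"
  unfolding ER_def excess_risk_def by measurable

lemma ER_SS: "ennreal (SS \<theta>) = 2 * ER \<theta>"
proof -
  have "ER \<theta> = ennreal (SS \<theta> / 2)" by (simp add: ER_def excess_SS)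
  then show ?thesis using SS_nonneg[of \<theta>] by (simp add: ennreal_mult[symmetric] ennreal_numeral[symmetric] del: ennreal_numeral)
qed

lemma step_bound:
  assumes \<alpha>: "\<And>j. 0 \<le> \<alpha> j"
  shows "Fk (Suc k) \<alpha> n \<le> (\<integral>\<^sup>+w. ennreal (\<Sum>j<n. \<alpha> j * ((1 - \<eta> k * lam j)\<^sup>2 * (dd (th k w) j)\<^sup>2
     + (\<eta> k)\<^sup>2 * (max C 0 * SS (th k w) + \<sigma>\<^sup>2) * lam j)) \<partial>P)"
proof -
  have "Fk (Suc k) \<alpha> n = (\<integral>\<^sup>+w. Gf \<alpha> n (\<eta> k) (th k w) (Z k w) \<partial>P)"
    unfolding Fk_def Gf_def by (simp add: th_Suc Z_def dd_def)
  also have "\<dots> = (\<integral>\<^sup>+w. (\<integral>\<^sup>+z. Gf \<alpha> n (\<eta> k) (th k w) z \<partial>(\<rho> \<Otimes>\<^sub>M density lborel (normal_density 0 \<sigma>))) \<partial>P)"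
    by (rule exp_split) (rule Gf_meas')
  also have "\<dots> \<le> (\<integral>\<^sup>+w. ennreal (\<Sum>j<n. \<alpha> j * ((1 - \<eta> k * lam j)\<^sup>2 * (dd (th k w) j)\<^sup>2
     + (\<eta> k)\<^sup>2 * (max C 0 * SS (th k w) + \<sigma>\<^sup>2) * lam j)) \<partial>P)"
    by (intro nn_integral_mono one_step[OF sig \<alpha>])
  finally show ?thesis .
qed


lemma dd_meas[measurable]: "(\<lambda>w. dd (th k w) j) \<in> borel_measurable P"
  unfolding dd_def by measurable

lemma rec:
  assumes \<alpha>: "\<And>j. 0 \<le> \<alpha> j"
  shows "Fk (Suc k) \<alpha> n \<le> Fk k (\<lambda>j. \<alpha> j * (1 - \<eta> k * lam j)\<^sup>2) n
     + ennreal ((\<eta> k)\<^sup>2 * max C 0 * (\<Sum>j<n. \<alpha> j * lam j)) * (2 * (\<integral>\<^sup>+w. ER (th k w) \<partial>P))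
     + ennreal ((\<eta> k)\<^sup>2 * \<sigma>\<^sup>2 * (\<Sum>j<n. \<alpha> j * lam j))"
proof -
  define c1 where "c1 = (\<eta> k)\<^sup>2 * max C 0 * (\<Sum>j<n. \<alpha> j * lam j)"
  define c2 where "c2 = (\<eta> k)\<^sup>2 * \<sigma>\<^sup>2 * (\<Sum>j<n. \<alpha> j * lam j)"
  have sl: "0 \<le> (\<Sum>j<n. \<alpha> j * lam j)" using \<alpha> lam_nonneg by (intro sum_nonneg mult_nonneg_nonneg) auto
  have c1: "0 \<le> c1" unfolding c1_def using sl by simp
  have c2: "0 \<le> c2" unfolding c2_def using sl by simp
  have pt: "ennreal (\<Sum>j<n. \<alpha> j * ((1 - \<eta> k * lam j)\<^sup>2 * (dd \<theta> j)\<^sup>2 + (\<eta> k)\<^sup>2 * (max C 0 * SS \<theta> + \<sigma>\<^sup>2) * lam j))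
      = (\<Sum>j<n. ennreal (\<alpha> j * (1 - \<eta> k * lam j)\<^sup>2 * (dd \<theta> j)\<^sup>2)) + ennreal c1 * (2 * ER \<theta>) + ennreal c2" for \<theta>
  proof -
    have "(\<Sum>j<n. \<alpha> j * ((1 - \<eta> k * lam j)\<^sup>2 * (dd \<theta> j)\<^sup>2 + (\<eta> k)\<^sup>2 * (max C 0 * SS \<theta> + \<sigma>\<^sup>2) * lam j))
      = (\<Sum>j<n. \<alpha> j * (1 - \<eta> k * lam j)\<^sup>2 * (dd \<theta> j)\<^sup>2 + (((\<eta> k)\<^sup>2 * max C 0 * SS \<theta>) * (\<alpha> j * lam j) + ((\<eta> k)\<^sup>2 * \<sigma>\<^sup>2) * (\<alpha> j * lam j)))"
      by (intro sum.cong refl) (simp add: algebra_simps)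
    also have "\<dots> = (\<Sum>j<n. \<alpha> j * (1 - \<eta> k * lam j)\<^sup>2 * (dd \<theta> j)\<^sup>2) + c1 * SS \<theta> + c2"
      unfolding sum.distrib sum_distrib_left[symmetric] c1_def c2_def by (simp add: algebra_simps)
    finally have e: "(\<Sum>j<n. \<alpha> j * ((1 - \<eta> k * lam j)\<^sup>2 * (dd \<theta> j)\<^sup>2 + (\<eta> k)\<^sup>2 * (max C 0 * SS \<theta> + \<sigma>\<^sup>2) * lam j))
      = (\<Sum>j<n. \<alpha> j * (1 - \<eta> k * lam j)\<^sup>2 * (dd \<theta> j)\<^sup>2) + c1 * SS \<theta> + c2" .
    have n1: "0 \<le> (\<Sum>j<n. \<alpha> j * (1 - \<eta> k * lam j)\<^sup>2 * (dd \<theta> j)\<^sup>2)"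
      using \<alpha> by (intro sum_nonneg) auto
    have n2: "0 \<le> c1 * SS \<theta>" using c1 SS_nonneg by simp
    have "ennreal ((\<Sum>j<n. \<alpha> j * (1 - \<eta> k * lam j)\<^sup>2 * (dd \<theta> j)\<^sup>2) + c1 * SS \<theta> + c2)
       = ennreal (\<Sum>j<n. \<alpha> j * (1 - \<eta> k * lam j)\<^sup>2 * (dd \<theta> j)\<^sup>2) + ennreal c1 * ennreal (SS \<theta>) + ennreal c2"
      using n1 n2 c1 c2 SS_nonneg[of \<theta>] by (simp add: ennreal_plus ennreal_mult)
    also have "ennreal (\<Sum>j<n. \<alpha> j * (1 - \<eta> k * lam j)\<^sup>2 * (dd \<theta> j)\<^sup>2) = (\<Sum>j<n. ennreal (\<alpha> j * (1 - \<eta> k * lam j)\<^sup>2 * (dd \<theta> j)\<^sup>2))"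
      using \<alpha> by (intro sum_ennreal[symmetric]) auto
    finally show ?thesis using e by (simp add: ER_SS)
  qed
  have "Fk (Suc k) \<alpha> n \<le> (\<integral>\<^sup>+w. (\<Sum>j<n. ennreal (\<alpha> j * (1 - \<eta> k * lam j)\<^sup>2 * (dd (th k w) j)\<^sup>2)) + ennreal c1 * (2 * ER (th k w)) + ennreal c2 \<partial>P)"
    using step_bound[where \<alpha>=\<alpha> and k=k and n=n, OF \<alpha>] by (simp add: pt)
  also have "\<dots> = (\<integral>\<^sup>+w. (\<Sum>j<n. ennreal (\<alpha> j * (1 - \<eta> k * lam j)\<^sup>2 * (dd (th k w) j)\<^sup>2)) \<partial>P)
     + ennreal c1 * (2 * (\<integral>\<^sup>+w. ER (th k w) \<partial>P)) + ennreal c2"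
    by (simp add: nn_integral_add nn_integral_cmult Q.emeasure_space_1)
  also have "(\<integral>\<^sup>+w. (\<Sum>j<n. ennreal (\<alpha> j * (1 - \<eta> k * lam j)\<^sup>2 * (dd (th k w) j)\<^sup>2)) \<partial>P)
      = Fk k (\<lambda>j. \<alpha> j * (1 - \<eta> k * lam j)\<^sup>2) n" by (simp add: Fk_def)
  finally show ?thesis by (simp add: c1_def c2_def)
qed

end


context kset3 begin

definition "Pm u k j = (\<Prod>i\<in>{u..<k}. (1 - \<eta> i * lam j)\<^sup>2)"

definition "Rb K k \<alpha> n = (\<Sum>j<n. \<alpha> j * Pm 0 k j * (ts j)\<^sup>2)
   + (2 * max C 0 * K + \<sigma>\<^sup>2) * (\<Sum>t<k. (\<eta> t)\<^sup>2 * (\<Sum>j<n. \<alpha> j * lam j * Pm (Suc t) k j))"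

lemma Pm_Suc: "u \<le> k \<Longrightarrow> Pm u (Suc k) j = Pm u k j * (1 - \<eta> k * lam j)\<^sup>2"
  unfolding Pm_def by (rule prod.atLeastLessThan_Suc)

lemma Pm_same: "Pm k k j = 1" unfolding Pm_def by simp

lemma Pm_nonneg: "0 \<le> Pm u k j" unfolding Pm_def by (intro prod_nonneg) auto

lemma Rb_rec:
  "Rb K (Suc k) \<alpha> n = Rb K k (\<lambda>j. \<alpha> j * (1 - \<eta> k * lam j)\<^sup>2) n
     + (2 * max C 0 * K + \<sigma>\<^sup>2) * ((\<eta> k)\<^sup>2 * (\<Sum>j<n. \<alpha> j * lam j))"
proof -
  let ?D = "2 * max C 0 * K + \<sigma>\<^sup>2"
  have a: "(\<Sum>j<n. \<alpha> j * Pm 0 (Suc k) j * (ts j)\<^sup>2) = (\<Sum>j<n. \<alpha> j * (1 - \<eta> k * lam j)\<^sup>2 * Pm 0 k j * (ts j)\<^sup>2)"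
    by (intro sum.cong refl) (simp add: Pm_Suc)
  have b: "(\<Sum>t<Suc k. (\<eta> t)\<^sup>2 * (\<Sum>j<n. \<alpha> j * lam j * Pm (Suc t) (Suc k) j))
     = (\<Sum>t<k. (\<eta> t)\<^sup>2 * (\<Sum>j<n. \<alpha> j * (1 - \<eta> k * lam j)\<^sup>2 * lam j * Pm (Suc t) k j)) + (\<eta> k)\<^sup>2 * (\<Sum>j<n. \<alpha> j * lam j)"
  proof -
    have "(\<Sum>t<k. (\<eta> t)\<^sup>2 * (\<Sum>j<n. \<alpha> j * lam j * Pm (Suc t) (Suc k) j))
        = (\<Sum>t<k. (\<eta> t)\<^sup>2 * (\<Sum>j<n. \<alpha> j * (1 - \<eta> k * lam j)\<^sup>2 * lam j * Pm (Suc t) k j))"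
    proof (intro sum.cong refl)
      fix t assume "t \<in> {..<k}"
      then have "(\<Sum>j<n. \<alpha> j * lam j * Pm (Suc t) (Suc k) j) = (\<Sum>j<n. \<alpha> j * (1 - \<eta> k * lam j)\<^sup>2 * lam j * Pm (Suc t) k j)"
        by (intro sum.cong refl) (simp add: Pm_Suc)
      then show "(\<eta> t)\<^sup>2 * (\<Sum>j<n. \<alpha> j * lam j * Pm (Suc t) (Suc k) j) = (\<eta> t)\<^sup>2 * (\<Sum>j<n. \<alpha> j * (1 - \<eta> k * lam j)\<^sup>2 * lam j * Pm (Suc t) k j)"
        by simp
    qed
    then show ?thesis by (simp add: Pm_same)
  qed
  show ?thesis unfolding Rb_def a b by (simp add: algebra_simps)
qed

lemma Fk0: "Fk 0 \<alpha> n = (\<Sum>j<n. ennreal (\<alpha> j * (ts j)\<^sup>2))"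
  unfolding Fk_def by (simp add: th_def dd_def Q.emeasure_space_1)

lemma alpha_bound:
  assumes hK: "\<And>t. t < k \<Longrightarrow> (\<integral>\<^sup>+w. ER (th t w) \<partial>P) \<le> ennreal K" and K: "0 \<le> K"
  shows "(\<forall>j. 0 \<le> \<alpha> j) \<Longrightarrow> Fk k \<alpha> n \<le> ennreal (Rb K k \<alpha> n)"
  using hK
proof (induction k arbitrary: \<alpha>)
  case 0
  have "Fk 0 \<alpha> n = ennreal (\<Sum>j<n. \<alpha> j * (ts j)\<^sup>2)"
    unfolding Fk0 using 0 by (intro sum_ennreal) auto
  also have "\<dots> = ennreal (Rb K 0 \<alpha> n)" by (simp add: Rb_def Pm_def)
  finally show ?case by simp
next
  case (Suc k)
  let ?\<alpha>' = "\<lambda>j. \<alpha> j * (1 - \<eta> k * lam j)\<^sup>2"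
  let ?D = "2 * max C 0 * K + \<sigma>\<^sup>2"
  have a0: "\<And>j. 0 \<le> \<alpha> j" using Suc.prems by auto
  have sl: "0 \<le> (\<Sum>j<n. \<alpha> j * lam j)" using a0 lam_nonneg by (intro sum_nonneg mult_nonneg_nonneg) auto
  have IH: "Fk k ?\<alpha>' n \<le> ennreal (Rb K k ?\<alpha>' n)"
    using Suc.IH[of ?\<alpha>'] Suc.prems a0 by auto
  have E: "(\<integral>\<^sup>+w. ER (th k w) \<partial>P) \<le> ennreal K" using Suc.prems by auto
  have "Fk (Suc k) \<alpha> n \<le> Fk k ?\<alpha>' n
     + ennreal ((\<eta> k)\<^sup>2 * max C 0 * (\<Sum>j<n. \<alpha> j * lam j)) * (2 * (\<integral>\<^sup>+w. ER (th k w) \<partial>P))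
     + ennreal ((\<eta> k)\<^sup>2 * \<sigma>\<^sup>2 * (\<Sum>j<n. \<alpha> j * lam j))"
    by (rule rec) (rule a0)
  also have "\<dots> \<le> ennreal (Rb K k ?\<alpha>' n)
     + ennreal ((\<eta> k)\<^sup>2 * max C 0 * (\<Sum>j<n. \<alpha> j * lam j)) * (2 * ennreal K)
     + ennreal ((\<eta> k)\<^sup>2 * \<sigma>\<^sup>2 * (\<Sum>j<n. \<alpha> j * lam j))"
    by (intro add_mono mult_left_mono IH E order_refl) auto
  also have "\<dots> = ennreal (Rb K k ?\<alpha>' n + (\<eta> k)\<^sup>2 * max C 0 * (\<Sum>j<n. \<alpha> j * lam j) * (2 * K)
     + (\<eta> k)\<^sup>2 * \<sigma>\<^sup>2 * (\<Sum>j<n. \<alpha> j * lam j))"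
  proof -
    have r0: "0 \<le> Rb K k ?\<alpha>' n"
      unfolding Rb_def using a0 lam_nonneg K Pm_nonneg
      by (intro add_nonneg_nonneg sum_nonneg mult_nonneg_nonneg) auto
    have "ennreal ((\<eta> k)\<^sup>2 * max C 0 * (\<Sum>j<n. \<alpha> j * lam j)) * (2 * ennreal K)
        = ennreal ((\<eta> k)\<^sup>2 * max C 0 * (\<Sum>j<n. \<alpha> j * lam j) * (2 * K))"
      using K sl by (simp add: ennreal_mult ennreal_numeral[symmetric] del: ennreal_numeral)
    then show ?thesis using r0 K sl by (simp add: ennreal_plus[symmetric] del: ennreal_plus)
  qed
  also have "\<dots> = ennreal (Rb K (Suc k) \<alpha> n)"
    by (simp add: Rb_rec algebra_simps)
  finally show ?case .
qed

end


lemma telescope: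
  fixes b :: "nat \<Rightarrow> real"
  shows "(\<Sum>t<k. b t * (\<Prod>i\<in>{Suc t..<k}. (1 - b i))) = 1 - (\<Prod>i\<in>{0..<k}. (1 - b i))"
proof (induction k)
  case 0 then show ?case by simp
next
  case (Suc k)
  have "(\<Sum>t<Suc k. b t * (\<Prod>i\<in>{Suc t..<Suc k}. (1 - b i)))
     = (\<Sum>t<k. b t * (\<Prod>i\<in>{Suc t..<k}. (1 - b i)) * (1 - b k)) + b k"
    by (simp add: prod.atLeastLessThan_Suc mult.assoc)
  also have "\<dots> = (\<Sum>t<k. b t * (\<Prod>i\<in>{Suc t..<k}. (1 - b i))) * (1 - b k) + b k"
    by (simp add: sum_distrib_right)
  also have "\<dots> = 1 - (\<Prod>i\<in>{0..<Suc k}. (1 - b i))"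
    unfolding Suc.IH by (simp add: algebra_simps)
  finally show ?case .
qed

context kset begin

lemma C_pos: assumes "0 < lam 0" shows "0 < C"
proof (rule ccontr)
  assume "\<not> 0 < C"
  then have C0: "ennreal C = 0" by (simp add: ennreal_neg)
  have "(\<integral>\<^sup>+x. ennreal ((v 0 \<bullet> \<phi> x)\<^sup>2 * (v 0 \<bullet> \<phi> x)\<^sup>2) \<partial>\<rho>)
     \<le> ennreal C * (\<integral>\<^sup>+x. ennreal ((v 0 \<bullet> \<phi> x)\<^sup>2) \<partial>\<rho>) * (\<integral>\<^sup>+x. ennreal ((v 0 \<bullet> \<phi> x)\<^sup>2) \<partial>\<rho>)"
    using hc unfolding hypercontractive_def by blast
  also have "\<dots> = 0" by (simp only: C0 mult_zero_left)
  finally have z: "(\<integral>\<^sup>+x. ennreal ((v 0 \<bullet> \<phi> x)\<^sup>2 * (v 0 \<bullet> \<phi> x)\<^sup>2) \<partial>\<rho>) = 0" by simp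
  have m: "(\<lambda>x. ennreal ((v 0 \<bullet> \<phi> x)\<^sup>2 * (v 0 \<bullet> \<phi> x)\<^sup>2)) \<in> borel_measurable \<rho>" by measurable
  have "AE x in \<rho>. ennreal ((v 0 \<bullet> \<phi> x)\<^sup>2 * (v 0 \<bullet> \<phi> x)\<^sup>2) = 0"
    using z nn_integral_0_iff_AE[OF m] by simp
  then have "AE x in \<rho>. (\<phi> x \<bullet> v 0)\<^sup>2 = 0"
  proof eventually_elim
    case (elim x)
    then have "(v 0 \<bullet> \<phi> x)\<^sup>2 * (v 0 \<bullet> \<phi> x)\<^sup>2 \<le> 0" by (simp add: ennreal_eq_0_iff)
    then have "v 0 \<bullet> \<phi> x = 0" by (simp add: mult_le_0_iff)
    then show ?case by (simp add: inner_commute)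
  qed
  then have "(\<integral>x. (\<phi> x \<bullet> v 0)\<^sup>2 \<partial>\<rho>) = 0" by (rule integral_eq_zero_AE)
  then show False using assms phi_sq_int[of 0] by simp
qed

lemma lam_sum_pos: assumes "0 < lam 0" shows "0 < (\<Sum>j. lam j)"
proof -
  have "sum lam {..<1} \<le> (\<Sum>j. lam j)" by (intro sum_le_suminf lam_summable) (auto intro: lam_nonneg)
  then show ?thesis using assms by simp
qed

end

context kset3 begin

lemma SS0: "SS 0 = (\<Sum>j. lam j * (ts j)\<^sup>2)"
  by (simp add: SS_def dd_def)

lemma ER_SUP: "ER \<theta> = (SUP n. \<Sum>j<n. ennreal (lam j / 2 * (dd \<theta> j)\<^sup>2))"
  unfolding ER_def excess_risk_def suminf_eq_SUP by (simp add: dd_def ts_def)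

lemma final_bound:
  assumes l0: "0 < lam 0"
    and hyp: "\<forall>i<N. 0 \<le> \<eta> i \<and> \<eta> i * lam 0 \<le> 1 \<and> \<eta> i * (2 * C * (\<Sum>j. lam j)) < 1"
  shows "k \<le> N \<Longrightarrow> (\<integral>\<^sup>+w. ER (th k w) \<partial>P) \<le> ennreal (2 * (SS 0 / 2) + \<sigma>\<^sup>2 / (2 * C))"
proof (induction k rule: less_induct)
  case (less k)
  define K where "K = 2 * (SS 0 / 2) + \<sigma>\<^sup>2 / (2 * C)"
  define L where "L = (\<Sum>j. lam j)"
  define B where "B = 1 / (2 * C * L)"
  have Cp: "0 < C" by (rule C_pos[OF l0])
  have Lp: "0 < L" unfolding L_def by (rule lam_sum_pos[OF l0])
  have K0: "0 \<le> K" unfolding K_def using SS_nonneg[of 0] Cp by simp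
  have etaB: "\<eta> i \<le> B" if "i < N" for i
  proof -
    have "\<eta> i * (2 * C * L) < 1" using hyp that unfolding L_def by auto
    then show ?thesis unfolding B_def using Cp Lp by (simp add: field_simps)
  qed
  have el: "0 \<le> \<eta> i * lam j \<and> \<eta> i * lam j \<le> 1" if "i < N" for i j
  proof -
    have "0 \<le> \<eta> i" "\<eta> i * lam 0 \<le> 1" using hyp that by auto
    moreover have "\<eta> i * lam j \<le> \<eta> i * lam 0" using lam_le0[of j] \<open>0 \<le> \<eta> i\<close> by (rule mult_left_mono)
    ultimately show ?thesis using lam_nonneg[of j] by simp
  qed
  have hK: "(\<integral>\<^sup>+w. ER (th t w) \<partial>P) \<le> ennreal K" if "t < k" for t
    using less.IH[of t] that less.prems unfolding K_def by simp
  define \<alpha> where "\<alpha> j = lam j / 2" for j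
  have a0: "\<forall>j. 0 \<le> \<alpha> j" unfolding \<alpha>_def using lam_nonneg by simp
  have Pm1: "Pm u k j \<le> 1" for u j
    unfolding Pm_def
  proof (intro prod_le_1 conjI)
    fix i assume "i \<in> {u..<k}"
    then have "i < N" using less.prems by auto
    then show "0 \<le> (1 - \<eta> i * lam j)\<^sup>2" "(1 - \<eta> i * lam j)\<^sup>2 \<le> 1"
      using el[of i j] by (auto simp: power_le_one abs_le_iff)
  qed
  have Rb_le: "Rb K k \<alpha> n \<le> K" for n
  proof -
    have b1: "(\<Sum>j<n. \<alpha> j * Pm 0 k j * (ts j)\<^sup>2) \<le> SS 0 / 2"
    proof -
      have "(\<Sum>j<n. \<alpha> j * Pm 0 k j * (ts j)\<^sup>2) \<le> (\<Sum>j<n. lam j * (ts j)\<^sup>2) / 2"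
        unfolding sum_divide_distrib \<alpha>_def
      proof (intro sum_mono)
        fix j
        have "lam j * (ts j)\<^sup>2 * Pm 0 k j \<le> lam j * (ts j)\<^sup>2"
          by (rule mult_left_le[OF Pm1]) (simp add: lam_nonneg)
        then show "lam j / 2 * Pm 0 k j * (ts j)\<^sup>2 \<le> lam j * (ts j)\<^sup>2 / 2" by (simp add: ac_simps)
      qed
      also have "(\<Sum>j<n. lam j * (ts j)\<^sup>2) \<le> SS 0"
        unfolding SS0 by (intro sum_le_suminf ts_summable) (auto intro: mult_nonneg_nonneg lam_nonneg)
      finally show ?thesis by simp
    qed
    have inner: "(\<Sum>t<k. (\<eta> t)\<^sup>2 * lam j * Pm (Suc t) k j) \<le> B" for j
    proof -
      define b where "b i = \<eta> i * lam j" for i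
      have b01: "0 \<le> b i \<and> b i \<le> 1" if "i < k" for i
        unfolding b_def using el[of i j] that less.prems by auto
      have Qn: "0 \<le> (\<Prod>i\<in>{u..<k}. (1 - b i))" for u
        using b01 by (intro prod_nonneg) auto
      have Q1: "(\<Prod>i\<in>{u..<k}. (1 - b i)) \<le> 1" for u
        using b01 by (intro prod_le_1) auto
      have PQ: "Pm u k j \<le> (\<Prod>i\<in>{u..<k}. (1 - b i))" for u
      proof -
        have "Pm u k j = (\<Prod>i\<in>{u..<k}. (1 - b i))\<^sup>2" unfolding Pm_def b_def by (simp add: prod_power_distrib)
        also have "\<dots> \<le> (\<Prod>i\<in>{u..<k}. (1 - b i))" using Qn[of u] Q1[of u] by (simp add: power2_eq_square mult_left_le)
        finally show ?thesis .
      qed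
      have "(\<Sum>t<k. (\<eta> t)\<^sup>2 * lam j * Pm (Suc t) k j) \<le> (\<Sum>t<k. B * (b t * (\<Prod>i\<in>{Suc t..<k}. (1 - b i))))"
      proof (intro sum_mono)
        fix t assume t: "t \<in> {..<k}"
        then have tN: "t < N" using less.prems by auto
        have "(\<eta> t)\<^sup>2 * lam j * Pm (Suc t) k j = \<eta> t * (b t * Pm (Suc t) k j)"
          by (simp add: b_def power2_eq_square)
        also have "\<dots> \<le> B * (b t * (\<Prod>i\<in>{Suc t..<k}. (1 - b i)))"
          using etaB[OF tN] b01[of t] t PQ[of "Suc t"] hyp tN Pm_nonneg
          by (intro mult_mono mult_left_mono) auto
        finally show "(\<eta> t)\<^sup>2 * lam j * Pm (Suc t) k j \<le> B * (b t * (\<Prod>i\<in>{Suc t..<k}. (1 - b i)))" .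
      qed
      also have "\<dots> = B * (1 - (\<Prod>i\<in>{0..<k}. (1 - b i)))"
        by (simp add: sum_distrib_left[symmetric] telescope)
      also have "\<dots> \<le> B"
      proof -
        have "0 \<le> B" unfolding B_def using Cp Lp by simp
        then show ?thesis using Qn[of 0] by (simp add: mult_left_le)
      qed
      finally show ?thesis .
    qed
    have b2: "(\<Sum>t<k. (\<eta> t)\<^sup>2 * (\<Sum>j<n. \<alpha> j * lam j * Pm (Suc t) k j)) \<le> 1 / (4 * C)"
    proof -
      have "(\<Sum>t<k. (\<eta> t)\<^sup>2 * (\<Sum>j<n. \<alpha> j * lam j * Pm (Suc t) k j))
          = (\<Sum>j<n. (lam j / 2) * (\<Sum>t<k. (\<eta> t)\<^sup>2 * lam j * Pm (Suc t) k j))"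
        unfolding \<alpha>_def sum_distrib_left by (subst sum.swap) (simp add: ac_simps)
      also have "\<dots> \<le> (\<Sum>j<n. (lam j / 2) * B)"
        by (intro sum_mono mult_left_mono inner) (simp add: lam_nonneg)
      also have "\<dots> = B / 2 * (\<Sum>j<n. lam j)" by (simp add: sum_distrib_left sum_distrib_right ac_simps)
      also have "\<dots> \<le> B / 2 * L"
        unfolding L_def using Cp Lp unfolding B_def
        by (intro mult_left_mono sum_le_suminf lam_summable) (auto intro: lam_nonneg)
      also have "\<dots> = 1 / (4 * C)" unfolding B_def using Lp Cp by (simp add: field_simps)
      finally show ?thesis .
    qed
    have D0: "0 \<le> 2 * max C 0 * K + \<sigma>\<^sup>2" using K0 by simp
    have "Rb K k \<alpha> n \<le> SS 0 / 2 + (2 * max C 0 * K + \<sigma>\<^sup>2) * (1 / (4 * C))"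
      unfolding Rb_def by (intro add_mono b1 mult_left_mono b2 D0)
    also have "\<dots> = K" unfolding K_def using Cp by (simp add: field_simps max_def)
    finally show ?thesis .
  qed
  have Fk_le: "Fk k \<alpha> n \<le> ennreal K" for n
    using alpha_bound[OF hK K0 a0] Rb_le[of n] by (meson ennreal_leI order_trans)
  have "(\<integral>\<^sup>+w. ER (th k w) \<partial>P) = (\<integral>\<^sup>+w. (SUP n. \<Sum>j<n. ennreal (\<alpha> j * (dd (th k w) j)\<^sup>2)) \<partial>P)"
    by (simp add: ER_SUP \<alpha>_def)
  also have "\<dots> = (SUP n. Fk k \<alpha> n)"
    unfolding Fk_def
  proof (rule nn_integral_monotone_convergence_SUP)
    show "incseq (\<lambda>n w. \<Sum>j<n. ennreal (\<alpha> j * (dd (th k w) j)\<^sup>2))"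
      by (auto simp: incseq_def le_fun_def intro!: sum_mono2)
  qed measurable
  also have "\<dots> \<le> ennreal K" by (intro SUP_least Fk_le)
  finally show ?case unfolding K_def .
qed

end


theorem mainTheorem11:
  shows "\<exists>Mf :: real \<Rightarrow> real \<Rightarrow> real \<Rightarrow> real.
   \<forall>(\<rho> :: 'x measure) (\<phi> :: 'x \<Rightarrow> 'h::{real_inner,banach,second_countable_topology})
    (lam :: nat \<Rightarrow> real) (v :: nat \<Rightarrow> 'h) (C :: real) (\<sigma> :: real) (s :: real)
    (a :: nat \<Rightarrow> real) (fstar :: 'x \<Rightarrow> real)
    (P :: 'w measure) (x :: nat \<Rightarrow> 'w \<Rightarrow> 'x) (eps :: nat \<Rightarrow> 'w \<Rightarrow> real)
    (\<eta> :: nat \<Rightarrow> real) (N :: nat).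
     prob_space \<rho> \<longrightarrow>
     \<phi> \<in> borel_measurable \<rho> \<longrightarrow>
     integrable \<rho> (\<lambda>z. (norm (\<phi> z))\<^sup>2) \<longrightarrow>
     eigen_system \<rho> \<phi> lam v \<longrightarrow>
     hypercontractive \<rho> \<phi> C \<longrightarrow>
     0 < \<sigma> \<longrightarrow>
     summable (\<lambda>j. (a j)\<^sup>2) \<longrightarrow> (\<Sum>j. (a j)\<^sup>2) \<le> 1 \<longrightarrow>
     fstar \<in> borel_measurable \<rho> \<longrightarrow>
     (\<lambda>n. \<integral>\<^sup>+z. ennreal ((fstar z - (\<Sum>j<n. a j * lam j powr ((s - 1) / 2) * (\<phi> z \<bullet> v j)))\<^sup>2) \<partial>\<rho>)
        \<longlonglongrightarrow> 0 \<longrightarrow>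
     excess_risk lam v (theta_star a lam s) 0 < \<infinity> \<longrightarrow>
     prob_space P \<longrightarrow>
     prob_space.indep_vars P (\<lambda>_. \<rho> \<Otimes>\<^sub>M borel) (\<lambda>k w. (x k w, eps k w)) UNIV \<longrightarrow>
     (\<forall>k. distr P (\<rho> \<Otimes>\<^sub>M borel) (\<lambda>w. (x k w, eps k w))
            = \<rho> \<Otimes>\<^sub>M density lborel (normal_density 0 \<sigma>)) \<longrightarrow>
     (\<forall>i<N. 0 \<le> \<eta> i \<and> \<eta> i * lam 0 \<le> 1 \<and> \<eta> i * (2 * C * (\<Sum>j. lam j)) < 1) \<longrightarrow>
     (\<forall>k\<le>N.
        (\<integral>\<^sup>+w. excess_risk lam v (theta_star a lam s)
                 (sgd_iter \<eta> \<phi> (\<lambda>i. x i w) (\<lambda>i. fstar (x i w) + eps i w) k) \<partial>P)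
        \<le> ennreal (Mf C (\<sigma>\<^sup>2) (enn2real (excess_risk lam v (theta_star a lam s) 0))))"
proof (intro exI[of _ "\<lambda>C \<sigma>2 E. 2 * E + \<sigma>2 / (2 * C)"] allI impI)
  fix \<rho> :: "'x measure" and \<phi> :: "'x \<Rightarrow> 'h::{real_inner,banach,second_countable_topology}"
    and lam :: "nat \<Rightarrow> real" and v :: "nat \<Rightarrow> 'h" and C :: real and \<sigma> :: real and s :: real
    and a :: "nat \<Rightarrow> real" and fstar :: "'x \<Rightarrow> real"
    and P :: "'w measure" and x :: "nat \<Rightarrow> 'w \<Rightarrow> 'x" and eps :: "nat \<Rightarrow> 'w \<Rightarrow> real"
    and \<eta> :: "nat \<Rightarrow> real" and N :: nat and k :: nat
  assume h1: "prob_space \<rho>" and h2: "\<phi> \<in> borel_measurable \<rho>"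
    and h3: "integrable \<rho> (\<lambda>z. (norm (\<phi> z))\<^sup>2)" and h4: "eigen_system \<rho> \<phi> lam v"
    and h5: "hypercontractive \<rho> \<phi> C" and h6: "0 < \<sigma>"
    and h7: "summable (\<lambda>j. (a j)\<^sup>2)" and h8: "(\<Sum>j. (a j)\<^sup>2) \<le> 1"
    and h9: "fstar \<in> borel_measurable \<rho>"
    and h10: "(\<lambda>n. \<integral>\<^sup>+z. ennreal ((fstar z - (\<Sum>j<n. a j * lam j powr ((s - 1) / 2) * (\<phi> z \<bullet> v j)))\<^sup>2) \<partial>\<rho>)
        \<longlonglongrightarrow> 0"
    and h11: "excess_risk lam v (theta_star a lam s) 0 < \<infinity>"
    and h12: "prob_space P"
    and h13: "prob_space.indep_vars P (\<lambda>_. \<rho> \<Otimes>\<^sub>M borel) (\<lambda>k w. (x k w, eps k w)) UNIV"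
    and h14: "\<forall>k. distr P (\<rho> \<Otimes>\<^sub>M borel) (\<lambda>w. (x k w, eps k w))
            = \<rho> \<Otimes>\<^sub>M density lborel (normal_density 0 \<sigma>)"
    and h15: "\<forall>i<N. 0 \<le> \<eta> i \<and> \<eta> i * lam 0 \<le> 1 \<and> \<eta> i * (2 * C * (\<Sum>j. lam j)) < 1"
    and hk: "k \<le> N"
  interpret K: kset3 \<rho> \<phi> lam v C a s fstar P x eps \<sigma> \<eta>
    apply (intro kset3.intro kset2.intro kset.intro kset2_axioms.intro kset3_axioms.intro)
    apply (rule h1 h2 h3 h4 h5 h9 h10 h11 h12 h6 h13 h14[rule_format])+
    done
  show "(\<integral>\<^sup>+w. excess_risk lam v (theta_star a lam s)
                 (sgd_iter \<eta> \<phi> (\<lambda>i. x i w) (\<lambda>i. fstar (x i w) + eps i w) k) \<partial>P)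
        \<le> ennreal (2 * enn2real (excess_risk lam v (theta_star a lam s) 0) + \<sigma>\<^sup>2 / (2 * C))"
  proof (cases "lam 0 = 0")
    case True
    have "lam j = 0" for j using K.lam_le0[of j] K.lam_nonneg[of j] True by linarith
    then have "\<And>\<theta>. excess_risk lam v (theta_star a lam s) \<theta> = 0" by (simp add: excess_risk_def)
    then show ?thesis by simp
  next
    case False
    then have l0: "0 < lam 0" using K.lam_nonneg[of 0] by simp
    have e0: "enn2real (excess_risk lam v (theta_star a lam s) 0) = K.SS 0 / 2"
      using K.excess_SS[of 0] K.SS_nonneg[of 0] by simp
    have "(\<integral>\<^sup>+w. K.ER (K.th k w) \<partial>P) \<le> ennreal (2 * (K.SS 0 / 2) + \<sigma>\<^sup>2 / (2 * C))"
      by (rule K.final_bound[OF l0 h15 hk])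
    then show ?thesis by (simp add: e0 K.ER_def K.th_def)
  qed
qed


end
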